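(* Let $\mathcal{H}_A,\mathcal{H}_B,\mathcal{H}_C$ be finite-dimensional Hilbert spaces, with a fixed reference basis $\{|i\rangle_A\}$ of $\mathcal{H}_A$. For every pure state $|\psi\rangle_{ABC}\in\mathcal{H}_A\otimes\mathcal{H}_B\otimes\mathcal{H}_C$ with reduced states $\rho_{AB},\rho_{AC},\rho_B,\rho_C$, $$C^{A|B}_r(\rho_{AB})-C^{A|C}_r(\rho_{AC})=S(\rho_B)-S(\rho_C).$$
   Context: $S$ is the von Neumann entropy and $S(\rho\|\sigma)=\mathrm{Tr}\,\rho(\log\rho-\log\sigma)$ the relative entropy. A state on $\mathcal{H}_A$ is incoherent if it is diagonal in $\{|i\rangle_A\}$. The set $\mathcal{IQ}$ of incoherent-quantum states on $\mathcal{H}_A\otimes\mathcal{H}_X$ consists of states $\sum_kp_k\sigma^A_k\otimes\tau^X_k$ with each $\sigma^A_k$ incoherent and $\tau^X_k$ arbitrary states. The relative entropy of IQ coherence is $C^{A|X}_r(\rho_{AX})=\min_{\sigma\in\mathcal{IQ}}S(\rho_{AX}\|\sigma)$. *)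

theory Defs
  imports "HOL-Analysis.Analysis"
begin

text \<open>Finite-dimensional operators on C^n are represented as functions
  nat => nat => complex; only entries with indices below the dimension matter.\<close>

type_synonym cmat = "nat \<Rightarrow> nat \<Rightarrow> complex"
type_synonym cvec = "nat \<Rightarrow> complex"

definition mmult :: "nat \<Rightarrow> cmat \<Rightarrow> cmat \<Rightarrow> cmat" where
  "mmult n A B = (\<lambda>i j. \<Sum>k<n. A i k * B k j)"

definition mtrace :: "nat \<Rightarrow> cmat \<Rightarrow> complex" where
  "mtrace n A = (\<Sum>i<n. A i i)"

definition cinner :: "nat \<Rightarrow> cvec \<Rightarrow> cvec \<Rightarrow> complex" where
  "cinner n x y = (\<Sum>i<n. cnj (x i) * y i)"

definition hermitian_mat :: "nat \<Rightarrow> cmat \<Rightarrow> bool" where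
  "hermitian_mat n A \<longleftrightarrow> (\<forall>i<n. \<forall>j<n. A j i = cnj (A i j))"

definition psd_mat :: "nat \<Rightarrow> cmat \<Rightarrow> bool" where
  "psd_mat n A \<longleftrightarrow> hermitian_mat n A \<and>
     (\<forall>x::cvec. 0 \<le> Re (\<Sum>i<n. \<Sum>j<n. cnj (x i) * A i j * x j))"

definition density :: "nat \<Rightarrow> cmat \<Rightarrow> bool" where
  "density n \<rho> \<longleftrightarrow> psd_mat n \<rho> \<and> mtrace n \<rho> = 1"

definition orthonormal_family :: "nat \<Rightarrow> (nat \<Rightarrow> cvec) \<Rightarrow> bool" where
  "orthonormal_family n v \<longleftrightarrow>
     (\<forall>a<n. \<forall>b<n. cinner n (v a) (v b) = (if a = b then 1 else 0))"

definition spectral_decomp :: "nat \<Rightarrow> cmat \<Rightarrow> (nat \<Rightarrow> real) \<Rightarrow> (nat \<Rightarrow> cvec) \<Rightarrow> bool" where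
  "spectral_decomp n A lam v \<longleftrightarrow> orthonormal_family n v \<and>
     (\<forall>i<n. \<forall>j<n. A i j = (\<Sum>k<n. of_real (lam k) * v k i * cnj (v k j)))"

definition mat_fun :: "nat \<Rightarrow> (real \<Rightarrow> real) \<Rightarrow> cmat \<Rightarrow> cmat" where
  "mat_fun n f A = (let (lam, v) = (SOME (lam, v). spectral_decomp n A lam v)
     in (\<lambda>i j. \<Sum>k<n. of_real (f (lam k)) * v k i * cnj (v k j)))"

text \<open>Logarithm restricted to the support (log 0 := 0), and 0 log 0 = 0.\<close>
definition logs :: "real \<Rightarrow> real" where
  "logs x = (if x > 0 then ln x else 0)"

definition von_neumann_entropy :: "nat \<Rightarrow> cmat \<Rightarrow> real" where
  "von_neumann_entropy n \<rho> = - Re (mtrace n (mmult n \<rho> (mat_fun n logs \<rho>)))"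

definition supp_le :: "nat \<Rightarrow> cmat \<Rightarrow> cmat \<Rightarrow> bool" where
  "supp_le n \<rho> \<sigma> \<longleftrightarrow> (\<forall>x::cvec. (\<forall>i<n. (\<Sum>j<n. \<sigma> i j * x j) = 0) \<longrightarrow>
                                (\<forall>i<n. (\<Sum>j<n. \<rho> i j * x j) = 0))"

definition rel_entropy :: "nat \<Rightarrow> cmat \<Rightarrow> cmat \<Rightarrow> ereal" where
  "rel_entropy n \<rho> \<sigma> = (if supp_le n \<rho> \<sigma>
     then ereal (Re (mtrace n (mmult n \<rho> (\<lambda>i j. mat_fun n logs \<rho> i j - mat_fun n logs \<sigma> i j))))
     else \<infinity>)"

text \<open>Tensor product, index (i,x) of C^d1 (x) C^d2 is i*d2 + x.\<close>
definition kron :: "nat \<Rightarrow> cmat \<Rightarrow> cmat \<Rightarrow> cmat" where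
  "kron d2 A B = (\<lambda>r s. A (r div d2) (s div d2) * B (r mod d2) (s mod d2))"

definition incoherent :: "nat \<Rightarrow> cmat \<Rightarrow> bool" where
  "incoherent n \<sigma> \<longleftrightarrow> density n \<sigma> \<and> (\<forall>i<n. \<forall>j<n. i \<noteq> j \<longrightarrow> \<sigma> i j = 0)"

definition IQ :: "nat \<Rightarrow> nat \<Rightarrow> cmat set" where
  "IQ dA dX = {\<rho>. \<exists>(m::nat) (p::nat \<Rightarrow> real) \<sigma> \<tau>.
      (\<forall>k<m. 0 \<le> p k) \<and> (\<Sum>k<m. p k) = 1 \<and>
      (\<forall>k<m. incoherent dA (\<sigma> k) \<and> density dX (\<tau> k)) \<and>
      (\<forall>i<dA*dX. \<forall>j<dA*dX. \<rho> i j = (\<Sum>k<m. of_real (p k) * kron dX (\<sigma> k) (\<tau> k) i j))}"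

definition IQ_coherence :: "nat \<Rightarrow> nat \<Rightarrow> cmat \<Rightarrow> ereal" where
  "IQ_coherence dA dX \<rho> = (INF \<sigma>\<in>IQ dA dX. rel_entropy (dA*dX) \<rho> \<sigma>)"

definition ptrace_second :: "nat \<Rightarrow> cmat \<Rightarrow> cmat" where
  "ptrace_second d2 M = (\<lambda>i j. \<Sum>k<d2. M (i*d2 + k) (j*d2 + k))"

definition ptrace_first :: "nat \<Rightarrow> nat \<Rightarrow> cmat \<Rightarrow> cmat" where
  "ptrace_first d1 d2 M = (\<lambda>i j. \<Sum>k<d1. M (k*d2 + i) (k*d2 + j))"

text \<open>On C^dA (x) C^dB (x) C^dC (index (a*dB+b)*dC+c), trace out the middle factor.\<close>
definition ptrace_mid :: "nat \<Rightarrow> nat \<Rightarrow> cmat \<Rightarrow> cmat" where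
  "ptrace_mid dB dC M = (\<lambda>r s. \<Sum>b<dB.
      M ((r div dC * dB + b) * dC + r mod dC) ((s div dC * dB + b) * dC + s mod dC))"

definition proj :: "cvec \<Rightarrow> cmat" where
  "proj \<psi> = (\<lambda>i j. \<psi> i * cnj (\<psi> j))"

end

theory Submission
  imports Defs
begin


lemma zcnj: "z * cnj z = (complex_of_real (cmod z))\<^sup>2"
  by (metis complex_norm_square of_real_power)

lemma cinner_sum_left:
  "cinner n (\<lambda>j. \<Sum>a\<in>K. c a * w a j) y = (\<Sum>a\<in>K. cnj (c a) * cinner n (w a) y)"
  unfolding cinner_def
  by (simp add: sum_distrib_left sum_distrib_right mult.assoc sum.swap[of _ K])

lemma cinner_sum_right:
  "cinner n y (\<lambda>j. \<Sum>a\<in>K. c a * w a j) = (\<Sum>a\<in>K. c a * cinner n y (w a))"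
  unfolding cinner_def
  by (simp add: sum_distrib_left sum_distrib_right mult.assoc mult.left_commute sum.swap[of _ K])

lemma cinner_diff_left: "cinner n (\<lambda>j. x j - y j) z = cinner n x z - cinner n y z"
  unfolding cinner_def by (simp add: algebra_simps sum_subtractf)

lemma cinner_diff_right: "cinner n z (\<lambda>j. x j - y j) = cinner n z x - cinner n z y"
  unfolding cinner_def by (simp add: algebra_simps sum_subtractf)

lemma cinner_cnj: "cnj (cinner n x y) = cinner n y x"
  unfolding cinner_def by (simp add: mult.commute)

lemma cinner_self: "cinner n x x = of_real (\<Sum>i<n. (cmod (x i))\<^sup>2)"
  unfolding cinner_def of_real_sum
  by (rule sum.cong) (simp_all add: zcnj mult.commute)

lemma cinner_self_eq0:
  assumes "cinner n x x = 0" "i < n" shows "x i = 0"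
proof -
  have "complex_of_real (\<Sum>i<n. (cmod (x i))\<^sup>2) = 0" using assms(1) by (simp only: cinner_self)
  then have "(\<Sum>i<n. (cmod (x i))\<^sup>2) = 0" by (simp only: of_real_eq_0_iff)
  then have "\<forall>i\<in>{..<n}. (cmod (x i))\<^sup>2 = 0" by (subst sum_nonneg_eq_0_iff[symmetric]) auto
  then show ?thesis using assms(2) by auto
qed

lemma cinner_basis_left: assumes "i < n" shows "cinner n (\<lambda>j. if j = i then 1 else 0) y = y i"
proof -
  have "cinner n (\<lambda>j. if j = i then 1 else 0) y = (\<Sum>j<n. if j = i then y j else 0)"
    unfolding cinner_def by (rule sum.cong) auto
  then show ?thesis using assms by (simp add: sum.delta)
qed

lemma cinner_basis_right: assumes "i < n" shows "cinner n y (\<lambda>j. if j = i then 1 else 0) = cnj (y i)"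
proof -
  have "cinner n y (\<lambda>j. if j = i then 1 else 0) = (\<Sum>j<n. if j = i then cnj (y j) else 0)"
    unfolding cinner_def by (rule sum.cong) auto
  then show ?thesis using assms by (simp add: sum.delta)
qed

lemma orthonormal_complete:
  assumes on: "orthonormal_family n u" and i: "i < n" and j: "j < n"
  shows "(\<Sum>a<n. u a i * cnj (u a j)) = (if i = j then 1 else 0)"
proof -
  define e where "e = (\<lambda>i::nat. \<lambda>j::nat. if j = i then (1::complex) else 0)"
  define r where "r = (\<lambda>i j. e i j - (\<Sum>a<n. cnj (u a i) * u a j))"
  have orth: "\<And>a b. a < n \<Longrightarrow> b < n \<Longrightarrow> cinner n (u a) (u b) = (if a = b then 1 else 0)"
    using on unfolding orthonormal_family_def by auto
  have rr: "cinner n (r i) (r i) = 1 - (\<Sum>a<n. of_real ((cmod (u a i))\<^sup>2))" if "i < n" for i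
  proof -
    have s1: "cinner n (e i) (e i) = 1" using that by (simp add: e_def cinner_basis_left)
    have s2: "cinner n (e i) (\<lambda>j. \<Sum>a<n. cnj (u a i) * u a j) = (\<Sum>a<n. cnj (u a i) * u a i)"
      by (simp add: cinner_sum_right e_def cinner_basis_left that)
    have s3: "cinner n (\<lambda>j. \<Sum>a<n. cnj (u a i) * u a j) (e i) = (\<Sum>a<n. u a i * cnj (u a i))"
      by (simp add: cinner_sum_left e_def cinner_basis_right that)
    have s4: "cinner n (\<lambda>j. \<Sum>a<n. cnj (u a i) * u a j) (\<lambda>j. \<Sum>a<n. cnj (u a i) * u a j)
        = (\<Sum>a<n. u a i * cnj (u a i))"
    proof -
      have "cinner n (\<lambda>j. \<Sum>a<n. cnj (u a i) * u a j) (\<lambda>j. \<Sum>a<n. cnj (u a i) * u a j)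
        = (\<Sum>a<n. u a i * (\<Sum>b<n. cnj (u b i) * cinner n (u a) (u b)))"
        by (simp add: cinner_sum_left cinner_sum_right)
      also have "\<dots> = (\<Sum>a<n. u a i * cnj (u a i))"
      proof (rule sum.cong)
        fix a assume a: "a \<in> {..<n}"
        have "(\<Sum>b<n. cnj (u b i) * cinner n (u a) (u b)) = (\<Sum>b<n. if b = a then cnj (u b i) else 0)"
          by (rule sum.cong) (use a in \<open>auto simp: orth\<close>)
        then show "u a i * (\<Sum>b<n. cnj (u b i) * cinner n (u a) (u b)) = u a i * cnj (u a i)"
          using a by (simp add: sum.delta')
      qed simp
      finally show ?thesis .
    qed
    have "cinner n (r i) (r i) = 1 - (\<Sum>a<n. u a i * cnj (u a i))"
      unfolding r_def cinner_diff_left cinner_diff_right s1 s2 s3 s4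
      by (simp add: mult.commute)
    also have "\<dots> = 1 - (\<Sum>a<n. of_real ((cmod (u a i))\<^sup>2))"
      by (simp add: zcnj)
    finally show ?thesis .
  qed
  have tot: "(\<Sum>i<n. cinner n (r i) (r i)) = 0"
  proof -
    have "(\<Sum>i<n. cinner n (r i) (r i)) = (\<Sum>i<n. 1 - (\<Sum>a<n. of_real ((cmod (u a i))\<^sup>2)))"
      by (rule sum.cong) (auto simp: rr)
    also have "\<dots> = of_nat n - (\<Sum>i<n. \<Sum>a<n. of_real ((cmod (u a i))\<^sup>2))"
      by (simp only: sum_subtractf) simp
    also have "\<dots> = of_nat n - (\<Sum>a<n. \<Sum>i<n. of_real ((cmod (u a i))\<^sup>2))"
      by (subst sum.swap) (rule refl)
    also have "\<dots> = of_nat n - (\<Sum>a<n. cinner n (u a) (u a))"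
      by (simp add: cinner_self)
    also have "\<dots> = 0" by (simp add: orth)
    finally show ?thesis .
  qed
  have nn: "\<And>i. cinner n (r i) (r i) = of_real (\<Sum>j<n. (cmod (r i j))\<^sup>2)" by (rule cinner_self)
  have "(\<Sum>i<n. (\<Sum>j<n. (cmod (r i j))\<^sup>2)) = 0"
    using tot by (simp add: nn flip: of_real_sum)
  then have "\<forall>i\<in>{..<n}. (\<Sum>j<n. (cmod (r i j))\<^sup>2) = 0"
    by (subst sum_nonneg_eq_0_iff[symmetric]) (auto intro: sum_nonneg)
  then have "cinner n (r i) (r i) = 0" using i by (simp add: nn)
  then have "r i j = 0" using cinner_self_eq0 j by blast
  then have "(\<Sum>a<n. cnj (u a i) * u a j) = e i j" by (simp add: r_def)
  then have "cnj (\<Sum>a<n. cnj (u a i) * u a j) = cnj (e i j)" by simp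
  then show ?thesis by (auto simp add: e_def mult.commute)
qed



definition mv :: "nat \<Rightarrow> cmat \<Rightarrow> cvec \<Rightarrow> cvec" where
  "mv n A x = (\<lambda>i. \<Sum>j<n. A i j * x j)"

lemma cinner_add_left: "cinner n (\<lambda>j. x j + y j) z = cinner n x z + cinner n y z"
  unfolding cinner_def by (simp add: algebra_simps sum.distrib)
lemma cinner_add_right: "cinner n z (\<lambda>j. x j + y j) = cinner n z x + cinner n z y"
  unfolding cinner_def by (simp add: algebra_simps sum.distrib)
lemma cinner_scale_left: "cinner n (\<lambda>j. c * x j) z = cnj c * cinner n x z"
  unfolding cinner_def by (simp add: algebra_simps sum_distrib_left)
lemma cinner_scale_right: "cinner n z (\<lambda>j. c * x j) = c * cinner n z x"
  unfolding cinner_def by (simp add: algebra_simps sum_distrib_left)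
lemma mv_add: "mv n A (\<lambda>j. x j + y j) = (\<lambda>i. mv n A x i + mv n A y i)"
  unfolding mv_def by (simp add: algebra_simps sum.distrib)
lemma mv_scale: "mv n A (\<lambda>j. c * x j) = (\<lambda>i. c * mv n A x i)"
  unfolding mv_def by (simp add: algebra_simps sum_distrib_left)

lemma cinner_cong: "(\<And>i. i < n \<Longrightarrow> x i = x' i) \<Longrightarrow> (\<And>i. i < n \<Longrightarrow> y i = y' i) \<Longrightarrow>
   cinner n x y = cinner n x' y'"
  unfolding cinner_def by (rule sum.cong) auto
lemma mv_cong: "(\<And>i. i < n \<Longrightarrow> x i = x' i) \<Longrightarrow> mv n A x = mv n A x'"
  unfolding mv_def by (rule ext, rule sum.cong) auto

lemma herm_adj:
  assumes "hermitian_mat n A"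
  shows "cinner n x (mv n A y) = cinner n (mv n A x) y"
proof -
  have "cinner n x (mv n A y) = (\<Sum>i<n. \<Sum>j<n. cnj (x i) * A i j * y j)"
    unfolding cinner_def mv_def by (simp add: sum_distrib_left mult.assoc)
  also have "\<dots> = (\<Sum>j<n. \<Sum>i<n. cnj (x i) * A i j * y j)" by (rule sum.swap)
  also have "\<dots> = (\<Sum>j<n. (\<Sum>i<n. cnj (A j i) * cnj (x i)) * y j)"
    unfolding sum_distrib_right
  proof (rule sum.cong[OF refl], rule sum.cong[OF refl])
    fix j i assume "j \<in> {..<n}" "i \<in> {..<n}"
    then have "A j i = cnj (A i j)" using assms unfolding hermitian_mat_def by blast
    then have "cnj (A j i) = A i j" by simp
    then show "cnj (x i) * A i j * y j = cnj (A j i) * cnj (x i) * y j" by simp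
  qed
  also have "\<dots> = cinner n (mv n A x) y"
    unfolding cinner_def mv_def by simp
  finally show ?thesis .
qed

lemma herm_quad_real:
  assumes "hermitian_mat n A"
  shows "cnj (cinner n x (mv n A x)) = cinner n x (mv n A x)"
  using herm_adj[OF assms, of x x] cinner_cnj by metis

lemma resid_exists:
  assumes orth: "\<And>a b. a < k \<Longrightarrow> b < k \<Longrightarrow> cinner n (u a) (u b) = (if a = b then 1 else 0)"
    and k: "k < n"
  shows "\<exists>y. (\<forall>a<k. cinner n (u a) y = 0) \<and> cinner n y y \<noteq> 0"
proof (rule ccontr)
  assume no: "\<not> ?thesis"
  define e where "e = (\<lambda>i::nat. \<lambda>j::nat. if j = i then (1::complex) else 0)"
  define r where "r = (\<lambda>i j. e i j - (\<Sum>a<k. cnj (u a i) * u a j))"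
  have inV: "cinner n (u b) (r i) = 0" if "b < k" "i < n" for b i
  proof -
    have "cinner n (u b) (r i) = cnj (u b i) - (\<Sum>a<k. cnj (u a i) * cinner n (u b) (u a))"
      unfolding r_def cinner_diff_right cinner_sum_right
      using that by (simp add: e_def cinner_basis_right)
    also have "(\<Sum>a<k. cnj (u a i) * cinner n (u b) (u a)) = (\<Sum>a<k. if a = b then cnj (u a i) else 0)"
      by (rule sum.cong) (use that in \<open>auto simp: orth\<close>)
    also have "\<dots> = cnj (u b i)" using that by (simp add: sum.delta')
    finally show ?thesis by simp
  qed
  have rr: "cinner n (r i) (r i) = 1 - (\<Sum>a<k. of_real ((cmod (u a i))\<^sup>2))" if "i < n" for i
  proof -
    have s1: "cinner n (e i) (e i) = 1" using that by (simp add: e_def cinner_basis_left)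
    have s2: "cinner n (e i) (\<lambda>j. \<Sum>a<k. cnj (u a i) * u a j) = (\<Sum>a<k. cnj (u a i) * u a i)"
      by (simp add: cinner_sum_right e_def cinner_basis_left that)
    have s3: "cinner n (\<lambda>j. \<Sum>a<k. cnj (u a i) * u a j) (e i) = (\<Sum>a<k. u a i * cnj (u a i))"
      by (simp add: cinner_sum_left e_def cinner_basis_right that)
    have s4: "cinner n (\<lambda>j. \<Sum>a<k. cnj (u a i) * u a j) (\<lambda>j. \<Sum>a<k. cnj (u a i) * u a j)
        = (\<Sum>a<k. u a i * cnj (u a i))"
    proof -
      have "cinner n (\<lambda>j. \<Sum>a<k. cnj (u a i) * u a j) (\<lambda>j. \<Sum>a<k. cnj (u a i) * u a j)
        = (\<Sum>a<k. u a i * (\<Sum>b<k. cnj (u b i) * cinner n (u a) (u b)))"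
        by (simp add: cinner_sum_left cinner_sum_right)
      also have "\<dots> = (\<Sum>a<k. u a i * cnj (u a i))"
      proof (rule sum.cong)
        fix a assume a: "a \<in> {..<k}"
        have "(\<Sum>b<k. cnj (u b i) * cinner n (u a) (u b)) = (\<Sum>b<k. if b = a then cnj (u b i) else 0)"
          by (rule sum.cong) (use a in \<open>auto simp: orth\<close>)
        then show "u a i * (\<Sum>b<k. cnj (u b i) * cinner n (u a) (u b)) = u a i * cnj (u a i)"
          using a by (simp add: sum.delta')
      qed simp
      finally show ?thesis .
    qed
    have "cinner n (r i) (r i) = 1 - (\<Sum>a<k. u a i * cnj (u a i))"
      unfolding r_def cinner_diff_left cinner_diff_right s1 s2 s3 s4
      by (simp add: mult.commute)
    also have "\<dots> = 1 - (\<Sum>a<k. of_real ((cmod (u a i))\<^sup>2))"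
      by (simp add: zcnj)
    finally show ?thesis .
  qed
  have zero: "cinner n (r i) (r i) = 0" if "i < n" for i
    using no inV that by blast
  have "(\<Sum>i<n. cinner n (r i) (r i)) = (\<Sum>i<n. 1 - (\<Sum>a<k. of_real ((cmod (u a i))\<^sup>2)))"
    by (rule sum.cong) (auto simp: rr)
  also have "\<dots> = of_nat n - (\<Sum>i<n. \<Sum>a<k. of_real ((cmod (u a i))\<^sup>2))"
    by (simp only: sum_subtractf) simp
  also have "\<dots> = of_nat n - (\<Sum>a<k. \<Sum>i<n. of_real ((cmod (u a i))\<^sup>2))"
    by (subst sum.swap) (rule refl)
  also have "\<dots> = of_nat n - (\<Sum>a<k. cinner n (u a) (u a))"
    by (simp add: cinner_self)
  also have "\<dots> = of_nat n - of_nat k" by (simp add: orth)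
  finally have "(\<Sum>i<n. cinner n (r i) (r i)) = of_nat n - of_nat k" .
  moreover have "(\<Sum>i<n. cinner n (r i) (r i)) = 0" by (simp add: zero)
  ultimately show False using k by simp
qed



lemma cinner_self_real: "cinner n z z = of_real (Re (cinner n z z))"
  by (simp add: cinner_self)

lemma cinner_self_ge0: "0 \<le> Re (cinner n z z)"
  by (simp add: cinner_self sum_nonneg)

lemma cinner_self_zero_iff: "Re (cinner n z z) = 0 \<Longrightarrow> i < n \<Longrightarrow> z i = 0"
  by (metis cinner_self_eq0 cinner_self_real of_real_0)

lemma normalize_vec:
  assumes "0 < Re (cinner n z z)"
  defines "c \<equiv> 1 / sqrt (Re (cinner n z z))"
  defines "z' \<equiv> (\<lambda>i. if i < n then of_real c * z i else 0)"
  shows "cinner n z' z' = 1" "\<And>y. cinner n y z' = of_real c * cinner n y z"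
    "\<And>A. cinner n z' (mv n A z') = of_real (c^2) * cinner n z (mv n A z)"
    "\<And>i. i \<ge> n \<Longrightarrow> z' i = 0"
    "\<And>i. cmod (z' i) \<le> 1"
proof -
  have eqz: "\<And>i. i < n \<Longrightarrow> z' i = of_real c * z i" by (simp add: z'_def)
  show y: "\<And>y. cinner n y z' = of_real c * cinner n y z"
    by (subst cinner_cong[of n y y z' "\<lambda>j. of_real c * z j"]) (simp_all add: eqz cinner_scale_right)
  have l: "\<And>y. cinner n z' y = of_real c * cinner n z y"
    by (subst cinner_cong[of n z' "\<lambda>j. of_real c * z j" y y]) (simp_all add: eqz cinner_scale_left)
  have mvz: "\<And>A. mv n A z' = (\<lambda>i. of_real c * mv n A z i)"
    by (subst mv_cong[of n z' "\<lambda>j. of_real c * z j"]) (simp_all add: eqz mv_scale)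
  show "\<And>A. cinner n z' (mv n A z') = of_real (c^2) * cinner n z (mv n A z)"
    by (simp add: mvz l cinner_scale_right power2_eq_square)
  have s: "sqrt (Re (cinner n z z)) ^ 2 = Re (cinner n z z)" using assms(1) by simp
  show one: "cinner n z' z' = 1"
    apply (simp add: l y)
    apply (subst cinner_self_real)
    using assms(1) by (simp add: c_def power2_eq_square flip: of_real_mult)
  show "\<And>i. i \<ge> n \<Longrightarrow> z' i = 0" by (simp add: z'_def)
  show "cmod (z' i) \<le> 1" for i
  proof (cases "i < n")
    case True
    have "(cmod (z' i))\<^sup>2 \<le> (\<Sum>j<n. (cmod (z' j))\<^sup>2)"
      by (rule member_le_sum) (use True in auto)
    also have "\<dots> = 1"
    proof -
      have "complex_of_real (\<Sum>j<n. (cmod (z' j))\<^sup>2) = 1" using one by (simp only: cinner_self)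
      then show ?thesis by (simp only: of_real_eq_1_iff)
    qed
    finally show ?thesis by (simp add: power_le_one_iff abs_le_square_iff)
  qed (simp add: z'_def)
qed

lemma cont_cinner_right: "continuous_on UNIV (\<lambda>z. cinner n y z)"
  unfolding cinner_def by (intro continuous_intros continuous_on_product_coordinates)

lemma cont_quad: "continuous_on UNIV (\<lambda>z. Re (cinner n z (mv n A z)))"
  unfolding cinner_def mv_def
  by (intro continuous_intros continuous_on_product_coordinates)

lemma cont_self: "continuous_on UNIV (\<lambda>z. cinner n z z)"
  unfolding cinner_def
  by (intro continuous_intros continuous_on_product_coordinates)



lemma compact_box: "compact (PiE UNIV (\<lambda>i::nat. if i < n then cball (0::complex) 1 else {0}))"
proof -
  have "compactin (product_topology (\<lambda>_. euclidean) UNIV)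
     (PiE UNIV (\<lambda>i::nat. if i < n then cball (0::complex) 1 else {0}))"
    by (subst compactin_PiE) auto
  then show ?thesis by (simp add: euclidean_product_topology)
qed

lemma eig_step:
  assumes herm: "hermitian_mat n A"
    and orth: "\<And>a b. a < k \<Longrightarrow> b < k \<Longrightarrow> cinner n (u a) (u b) = (if a = b then 1 else 0)"
    and eig: "\<And>a i. a < k \<Longrightarrow> i < n \<Longrightarrow> mv n A (u a) i = of_real (lam a) * u a i"
    and k: "k < n"
  shows "\<exists>x \<mu>. (\<forall>a<k. cinner n (u a) x = 0) \<and> cinner n x x = 1 \<and> (\<forall>i<n. mv n A x i = of_real \<mu> * x i)"
proof -
  define V where "V z \<longleftrightarrow> (\<forall>a<k. cinner n (u a) z = 0)" for z
  have inv: "V (mv n A z)" if "V z" for z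
    unfolding V_def
  proof (intro allI impI)
    fix a assume a: "a < k"
    have "cinner n (u a) (mv n A z) = cinner n (mv n A (u a)) z" by (rule herm_adj[OF herm])
    also have "\<dots> = cinner n (\<lambda>i. of_real (lam a) * u a i) z"
      by (rule cinner_cong) (simp_all add: eig a)
    also have "\<dots> = 0" using that a by (simp add: V_def cinner_scale_left)
    finally show "cinner n (u a) (mv n A z) = 0" .
  qed
  define T where "T = PiE UNIV (\<lambda>i::nat. if i < n then cball (0::complex) 1 else {0})"
  define S where "S = T \<inter> {z. (\<forall>a. a < k \<longrightarrow> cinner n (u a) z = 0) \<and> cinner n z z = 1}"
  have cS: "compact S"
    unfolding S_def T_def
  proof (rule compact_Int_closed[OF compact_box])
    show "closed {z. (\<forall>a. a < k \<longrightarrow> cinner n (u a) z = 0) \<and> cinner n z z = 1}"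
    proof (intro closed_Collect_conj closed_Collect_all)
      fix a
      show "closed {z. a < k \<longrightarrow> cinner n (u a) z = 0}"
      proof (cases "a < k")
        case True
        then show ?thesis using closed_Collect_eq[OF cont_cinner_right[of n "u a"] continuous_on_const]
          by simp
      qed simp
      show "closed {z. cinner n z z = 1}"
        by (rule closed_Collect_eq[OF cont_self continuous_on_const])
    qed
  qed
  have norm_in_S: "(\<lambda>i. if i < n then of_real (1 / sqrt (Re (cinner n z z))) * z i else 0) \<in> S"
    if "V z" "0 < Re (cinner n z z)" for z
  proof -
    define z' where "z' = (\<lambda>i. if i < n then of_real (1 / sqrt (Re (cinner n z z))) * z i else 0)"
    note nz = normalize_vec[OF that(2), folded z'_def]
    have "z' \<in> T" unfolding T_def
    proof (unfold PiE_UNIV_domain, rule Pi_I)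
      fix i show "z' i \<in> (if i < n then cball 0 1 else {0})"
      proof -
        have a: "cmod (z' i) \<le> 1" unfolding z'_def by (rule normalize_vec(5)[OF that(2)])
        have b: "\<not> i < n \<Longrightarrow> z' i = 0" unfolding z'_def by simp
        show ?thesis using a b by (cases "i < n") (simp_all add: dist_norm)
      qed
    qed
    moreover have "\<forall>a. a < k \<longrightarrow> cinner n (u a) z' = 0" using nz(2) that(1) by (simp add: V_def)
    ultimately show ?thesis unfolding S_def z'_def[symmetric] using nz(1) by blast
  qed
  obtain y where y: "V y" "cinner n y y \<noteq> 0"
    using resid_exists[OF orth k] unfolding V_def by blast
  have ypos: "0 < Re (cinner n y y)"
    using y(2) cinner_self_ge0[of n y] cinner_self_real[of n y]
    by (metis less_eq_real_def of_real_0)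
  have Sne: "S \<noteq> {}" using norm_in_S[OF y(1) ypos] by blast
  obtain x where xS: "x \<in> S" and xmax: "\<And>z. z \<in> S \<Longrightarrow> Re (cinner n z (mv n A z)) \<le> Re (cinner n x (mv n A x))"
    using continuous_attains_sup[OF cS Sne continuous_on_subset[OF cont_quad subset_UNIV]] by blast
  define \<mu> where "\<mu> = Re (cinner n x (mv n A x))"
  have Vx: "V x" and xx: "cinner n x x = 1" using xS by (auto simp: S_def V_def)
  have ineq: "Re (cinner n z (mv n A z)) \<le> \<mu> * Re (cinner n z z)" if "V z" for z
  proof (cases "Re (cinner n z z) = 0")
    case True
    then have "\<And>i. i < n \<Longrightarrow> z i = 0" using cinner_self_zero_iff by blast
    then have "cinner n z (mv n A z) = cinner n (\<lambda>_. 0) (mv n A z)" by (intro cinner_cong) auto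
    then show ?thesis using True by (simp add: cinner_def)
  next
    case False
    then have pos: "0 < Re (cinner n z z)" using cinner_self_ge0[of n z] by linarith
    define c where "c = 1 / sqrt (Re (cinner n z z))"
    note nz = normalize_vec[OF pos, folded c_def]
    have "Re (of_real (c^2) * cinner n z (mv n A z)) \<le> \<mu>"
      using xmax[OF norm_in_S[OF that pos, folded c_def]] nz(3) by (simp add: \<mu>_def)
    then have "c^2 * Re (cinner n z (mv n A z)) \<le> \<mu>" by simp
    moreover have "c^2 = 1 / Re (cinner n z z)" using pos by (simp add: c_def power_divide)
    ultimately show ?thesis using pos by (simp add: field_simps)
  qed
  define w where "w = (\<lambda>i. mv n A x i - of_real \<mu> * x i)"
  have Vw: "V w"
    using inv[OF Vx] Vx unfolding V_def w_def by (simp add: cinner_diff_right cinner_scale_right)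
  have mvx: "mv n A x = (\<lambda>i. w i + of_real \<mu> * x i)" by (simp add: w_def)
  define W where "W = Re (cinner n w w)"
  define d where "d = Re (cinner n w (mv n A w)) - \<mu> * W"
  have W0: "0 \<le> W" unfolding W_def by (rule cinner_self_ge0)
  have key: "2 * t * W + t^2 * d \<le> 0" if "t > 0" for t :: real
  proof -
    define z where "z = (\<lambda>i. x i + of_real t * w i)"
    have Vz: "V z" using Vx Vw unfolding V_def z_def by (simp add: cinner_add_right cinner_scale_right)
    have e1: "cinner n x (mv n A w) = cinner n w w + of_real \<mu> * cinner n x w"
      by (simp add: herm_adj[OF herm] mvx cinner_add_left cinner_scale_left)
    have e2: "cinner n w (mv n A x) = cinner n w w + of_real \<mu> * cinner n w x"
      by (simp add: mvx cinner_add_right cinner_scale_right)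
    have "cinner n z (mv n A z) - of_real \<mu> * cinner n z z
      = (cinner n x (mv n A x) - of_real \<mu> * cinner n x x)
        + of_real t * (cinner n x (mv n A w) - of_real \<mu> * cinner n x w)
        + of_real t * (cinner n w (mv n A x) - of_real \<mu> * cinner n w x)
        + of_real (t^2) * (cinner n w (mv n A w) - of_real \<mu> * cinner n w w)"
      unfolding z_def mv_add mv_scale cinner_add_left cinner_add_right cinner_scale_left cinner_scale_right
      by (simp add: algebra_simps power2_eq_square)
    also have "\<dots> = (cinner n x (mv n A x) - of_real \<mu>)
        + of_real (2 * t) * cinner n w w
        + of_real (t^2) * (cinner n w (mv n A w) - of_real \<mu> * cinner n w w)"
      by (simp add: e1 e2 xx algebra_simps)
    finally have E: "cinner n z (mv n A z) - of_real \<mu> * cinner n z z = (cinner n x (mv n A x) - of_real \<mu>)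
        + of_real (2 * t) * cinner n w w
        + of_real (t^2) * (cinner n w (mv n A w) - of_real \<mu> * cinner n w w)" .
    have mu: "Re (cinner n x (mv n A x)) = \<mu>" by (simp add: \<mu>_def)
    have "Re (cinner n z (mv n A z)) - \<mu> * Re (cinner n z z) = Re (cinner n z (mv n A z) - of_real \<mu> * cinner n z z)"
      by simp
    also have "\<dots> = Re ((cinner n x (mv n A x) - of_real \<mu>)
        + of_real (2 * t) * cinner n w w
        + of_real (t^2) * (cinner n w (mv n A w) - of_real \<mu> * cinner n w w))" by (simp only: E)
    also have "\<dots> = 2 * t * W + t^2 * d"
      using mu by (simp add: W_def d_def algebra_simps)
    finally have "Re (cinner n z (mv n A z)) - \<mu> * Re (cinner n z z) = 2 * t * W + t^2 * d" .
    then show ?thesis using ineq[OF Vz] by linarith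
  qed
  have W0': "W = 0"
  proof (rule ccontr)
    assume "W \<noteq> 0"
    then have Wp: "W > 0" using W0 by linarith
    define t where "t = W / (\<bar>d\<bar> + 1)"
    have tp: "t > 0" unfolding t_def using Wp by (simp add: add_pos_nonneg)
    have "t * \<bar>d\<bar> \<le> W" unfolding t_def using Wp
      by (simp add: field_simps mult_left_mono) 
    then have "t^2 * \<bar>d\<bar> \<le> t * W" using tp by (simp add: power2_eq_square mult.assoc mult_left_mono)
    moreover have "- (t^2 * \<bar>d\<bar>) \<le> t^2 * d"
    proof -
      have "t^2 * (- \<bar>d\<bar>) \<le> t^2 * d" by (rule mult_left_mono) auto
      then show ?thesis by simp
    qed
    moreover have "0 < t * W" using tp Wp by simp
    ultimately have "0 < 2 * t * W + t^2 * d" by linarith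
    then show False using key[OF tp] by linarith
  qed
  have "\<And>i. i < n \<Longrightarrow> w i = 0" using W0' cinner_self_zero_iff unfolding W_def by blast
  then have "\<forall>i<n. mv n A x i = of_real \<mu> * x i" by (simp add: w_def)
  then show ?thesis using Vx xx unfolding V_def by blast
qed



lemma eig_family:
  assumes herm: "hermitian_mat n A"
  shows "k \<le> n \<Longrightarrow> \<exists>u lam. (\<forall>a b. a < k \<longrightarrow> b < k \<longrightarrow> cinner n (u a) (u b) = (if a = b then 1 else 0))
     \<and> (\<forall>a i. a < k \<longrightarrow> i < n \<longrightarrow> mv n A (u a) i = of_real (lam a) * u a i)"
proof (induction k)
  case 0
  then show ?case by auto
next
  case (Suc k)
  then obtain u lam where orth: "\<forall>a b. a < k \<longrightarrow> b < k \<longrightarrow> cinner n (u a) (u b) = (if a = b then 1 else 0)"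
    and eig: "\<forall>a i. a < k \<longrightarrow> i < n \<longrightarrow> mv n A (u a) i = of_real (lam a) * u a i" by auto
  obtain x \<mu> where x: "\<forall>a<k. cinner n (u a) x = 0" "cinner n x x = 1" "\<forall>i<n. mv n A x i = of_real \<mu> * x i"
    using eig_step[OF herm, of k u lam] orth eig Suc.prems by auto
  have x': "\<forall>a<k. cinner n x (u a) = 0" using x(1) cinner_cnj by (metis complex_cnj_zero)
  show ?case
    apply (rule exI[of _ "u(k := x)"], rule exI[of _ "lam(k := \<mu>)"])
    using orth eig x x' by (auto simp: less_Suc_eq)
qed

lemma spectral_exists:
  assumes herm: "hermitian_mat n A"
  shows "\<exists>lam v. spectral_decomp n A lam v"
proof -
  obtain u lam where orth: "\<forall>a b. a < n \<longrightarrow> b < n \<longrightarrow> cinner n (u a) (u b) = (if a = b then 1 else 0)"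
    and eig: "\<forall>a i. a < n \<longrightarrow> i < n \<longrightarrow> mv n A (u a) i = of_real (lam a) * u a i"
    using eig_family[OF herm le_refl] by blast
  have on: "orthonormal_family n u" using orth by (simp add: orthonormal_family_def)
  have "A i j = (\<Sum>k<n. of_real (lam k) * u k i * cnj (u k j))" if "i < n" "j < n" for i j
  proof -
    have "(\<Sum>l<n. A i l * (if l = j then 1 else 0)) = (\<Sum>l<n. if l = j then A i l else 0)"
      by (rule sum.cong) auto
    then have "A i j = (\<Sum>l<n. A i l * (if l = j then 1 else 0))" using that(2) by (simp add: sum.delta')
    also have "\<dots> = (\<Sum>l<n. A i l * (\<Sum>k<n. u k l * cnj (u k j)))"
      by (rule sum.cong) (auto simp: orthonormal_complete[OF on _ that(2)])
    also have "\<dots> = (\<Sum>k<n. (\<Sum>l<n. A i l * u k l) * cnj (u k j))"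
      by (simp add: sum_distrib_left sum_distrib_right mult.assoc) (rule sum.swap)
    also have "\<dots> = (\<Sum>k<n. of_real (lam k) * u k i * cnj (u k j))"
      by (rule sum.cong) (use eig that in \<open>auto simp: mv_def\<close>)
    finally show ?thesis .
  qed
  then show ?thesis using on unfolding spectral_decomp_def by blast
qed



definition sd :: "nat \<Rightarrow> cmat \<Rightarrow> (nat \<Rightarrow> real) \<times> (nat \<Rightarrow> cvec)" where
  "sd n A = (SOME (lam, v). spectral_decomp n A lam v)"

definition sdl where "sdl n A = fst (sd n A)"
definition sdv where "sdv n A = snd (sd n A)"

lemma sd_spec: "hermitian_mat n A \<Longrightarrow> spectral_decomp n A (sdl n A) (sdv n A)"
proof -
  assume "hermitian_mat n A"
  then obtain lam v where "spectral_decomp n A lam v" using spectral_exists by blast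
  then have "\<exists>p. (case p of (lam, v) \<Rightarrow> spectral_decomp n A lam v)" by auto
  from someI_ex[OF this] have "case sd n A of (lam, v) \<Rightarrow> spectral_decomp n A lam v" unfolding sd_def .
  then show ?thesis unfolding sdl_def sdv_def by (simp split: prod.splits)
qed

lemma mat_fun_sd: "mat_fun n f A = (\<lambda>i j. \<Sum>k<n. of_real (f (sdl n A k)) * sdv n A k i * cnj (sdv n A k j))"
  unfolding mat_fun_def sdl_def sdv_def sd_def by (simp add: case_prod_beta Let_def)

lemma spec_orth: "spectral_decomp n A lam v \<Longrightarrow> a < n \<Longrightarrow> b < n \<Longrightarrow> cinner n (v a) (v b) = (if a = b then 1 else 0)"
  unfolding spectral_decomp_def orthonormal_family_def by auto

lemma spec_mv':
  assumes sp: "spectral_decomp n A lam v" and i: "i < n"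
  shows "mv n A x i = (\<Sum>k<n. of_real (lam k) * v k i * cinner n (v k) x)"
proof -
  have "mv n A x i = (\<Sum>j<n. (\<Sum>k<n. of_real (lam k) * v k i * cnj (v k j)) * x j)"
    unfolding mv_def by (rule sum.cong) (use sp i in \<open>auto simp: spectral_decomp_def\<close>)
  also have "\<dots> = (\<Sum>k<n. of_real (lam k) * v k i * cinner n (v k) x)"
    unfolding cinner_def sum_distrib_right sum_distrib_left
    by (subst sum.swap) (simp add: mult.assoc)
  finally show ?thesis .
qed

lemma spec_eig:
  assumes sp: "spectral_decomp n A lam v" and k: "k < n" and i: "i < n"
  shows "mv n A (v k) i = of_real (lam k) * v k i"
proof -
  have "mv n A (v k) i = (\<Sum>l<n. of_real (lam l) * v l i * cinner n (v l) (v k))" by (rule spec_mv'[OF sp i])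
  also have "\<dots> = (\<Sum>l<n. if l = k then of_real (lam l) * v l i else 0)"
    by (rule sum.cong) (auto simp: spec_orth[OF sp] k)
  also have "\<dots> = of_real (lam k) * v k i" using k by (simp add: sum.delta')
  finally show ?thesis .
qed

lemma spec_quad:
  assumes sp: "spectral_decomp n A lam v"
  shows "cinner n x (mv n A x) = (\<Sum>k<n. of_real (lam k) * of_real ((cmod (cinner n (v k) x))\<^sup>2))"
proof -
  have "cinner n x (mv n A x) = cinner n x (\<lambda>i. \<Sum>k<n. (of_real (lam k) * cinner n (v k) x) * v k i)"
    by (rule cinner_cong) (simp_all add: spec_mv'[OF sp] mult_ac)
  also have "\<dots> = (\<Sum>k<n. of_real (lam k) * cinner n (v k) x * cinner n x (v k))"
    by (simp add: cinner_sum_right)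
  also have "\<dots> = (\<Sum>k<n. of_real (lam k) * of_real ((cmod (cinner n (v k) x))\<^sup>2))"
  proof (rule sum.cong[OF refl])
    fix k
    have "cinner n x (v k) = cnj (cinner n (v k) x)" by (simp only: cinner_cnj)
    then show "of_real (lam k) * cinner n (v k) x * cinner n x (v k) = of_real (lam k) * of_real ((cmod (cinner n (v k) x))\<^sup>2)"
      by (simp add: zcnj mult.assoc)
  qed
  finally show ?thesis .
qed

lemma spec_quad_self:
  assumes sp: "spectral_decomp n A lam v" and k: "k < n"
  shows "cinner n (v k) (mv n A (v k)) = of_real (lam k)"
proof -
  have "cinner n (v k) (mv n A (v k)) = cinner n (v k) (\<lambda>i. of_real (lam k) * v k i)"
    by (rule cinner_cong) (simp_all add: spec_eig[OF sp k])
  then show ?thesis by (simp add: cinner_scale_right spec_orth[OF sp k k])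
qed

lemma parseval:
  assumes on: "orthonormal_family n w"
  shows "(\<Sum>l<n. (cmod (cinner n (w l) x))\<^sup>2) = Re (cinner n x x)"
proof -
  have "(\<Sum>l<n. complex_of_real ((cmod (cinner n (w l) x))\<^sup>2)) = (\<Sum>l<n. cinner n x (w l) * cinner n (w l) x)"
  proof (rule sum.cong[OF refl])
    fix l
    have "cinner n x (w l) = cnj (cinner n (w l) x)" by (simp only: cinner_cnj)
    then show "complex_of_real ((cmod (cinner n (w l) x))\<^sup>2) = cinner n x (w l) * cinner n (w l) x"
      by (simp add: zcnj mult.commute)
  qed
  also have "\<dots> = (\<Sum>l<n. \<Sum>j<n. \<Sum>i<n. cnj (x i) * x j * (w l i * cnj (w l j)))"
    unfolding cinner_def sum_distrib_left sum_distrib_right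
    by (rule sum.cong[OF refl], rule sum.cong[OF refl], rule sum.cong[OF refl]) (simp add: mult_ac)
  also have "\<dots> = (\<Sum>j<n. \<Sum>i<n. cnj (x i) * x j * (\<Sum>l<n. w l i * cnj (w l j)))"
    unfolding sum_distrib_left
    by (subst sum.swap, rule sum.cong[OF refl], subst sum.swap, rule refl)
  also have "\<dots> = (\<Sum>j<n. \<Sum>i<n. if i = j then cnj (x i) * x j else 0)"
    by (rule sum.cong[OF refl], rule sum.cong[OF refl]) (simp add: orthonormal_complete[OF on])
  also have "\<dots> = cinner n x x" by (simp add: cinner_def sum.delta')
  finally have "complex_of_real (\<Sum>l<n. (cmod (cinner n (w l) x))\<^sup>2) = cinner n x x" by simp
  then show ?thesis by (metis Re_complex_of_real)
qed

lemma trace_fun: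
  "mtrace n (mmult n B (mat_fun n f S)) = (\<Sum>l<n. of_real (f (sdl n S l)) * cinner n (sdv n S l) (mv n B (sdv n S l)))"
proof -
  let ?w = "sdv n S" and ?b = "sdl n S"
  have "mtrace n (mmult n B (mat_fun n f S)) = (\<Sum>i<n. \<Sum>k<n. \<Sum>l<n. B i k * (of_real (f (?b l)) * ?w l k * cnj (?w l i)))"
    unfolding mtrace_def mmult_def mat_fun_sd sum_distrib_left by simp
  also have "\<dots> = (\<Sum>l<n. \<Sum>i<n. \<Sum>k<n. of_real (f (?b l)) * (cnj (?w l i) * (B i k * ?w l k)))"
    by (subst sum.swap, rule sum.cong[OF refl], subst sum.swap) (simp add: mult_ac)
  also have "\<dots> = (\<Sum>l<n. of_real (f (?b l)) * cinner n (?w l) (mv n B (?w l)))"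
    unfolding cinner_def mv_def sum_distrib_left by simp
  finally show ?thesis .
qed



lemma quad_mv: "cinner n x (mv n A x) = (\<Sum>i<n. \<Sum>j<n. cnj (x i) * A i j * x j)"
  unfolding cinner_def mv_def by (simp add: sum_distrib_left mult.assoc)

lemma psd_quad: "psd_mat n A \<Longrightarrow> 0 \<le> Re (cinner n x (mv n A x))"
  unfolding psd_mat_def quad_mv by blast

lemma density_herm: "density n A \<Longrightarrow> hermitian_mat n A"
  unfolding density_def psd_mat_def by blast

lemma density_eig_nonneg:
  assumes "density n A" "k < n" shows "0 \<le> sdl n A k"
proof -
  have sp: "spectral_decomp n A (sdl n A) (sdv n A)" using sd_spec density_herm assms(1) by blast
  have "0 \<le> Re (cinner n (sdv n A k) (mv n A (sdv n A k)))"
    using psd_quad assms(1) unfolding density_def by blast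
  then show ?thesis using spec_quad_self[OF sp assms(2)] by simp
qed

lemma spec_trace:
  assumes sp: "spectral_decomp n A lam v"
  shows "mtrace n A = of_real (\<Sum>k<n. lam k)"
proof -
  have "mtrace n A = (\<Sum>i<n. \<Sum>k<n. of_real (lam k) * v k i * cnj (v k i))"
    unfolding mtrace_def by (rule sum.cong) (use sp in \<open>auto simp: spectral_decomp_def\<close>)
  also have "\<dots> = (\<Sum>k<n. of_real (lam k) * cinner n (v k) (v k))"
    unfolding cinner_def sum_distrib_left
    by (subst sum.swap) (simp add: mult_ac)
  also have "\<dots> = (\<Sum>k<n. of_real (lam k))"
    by (rule sum.cong) (simp_all add: spec_orth[OF sp])
  finally show ?thesis by simp
qed

lemma density_eig_sum:
  assumes "density n A" shows "(\<Sum>k<n. sdl n A k) = 1"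
proof -
  have sp: "spectral_decomp n A (sdl n A) (sdv n A)" using sd_spec density_herm assms(1) by blast
  have "mtrace n A = 1" using assms unfolding density_def by blast
  then show ?thesis using spec_trace[OF sp] by (metis of_real_eq_1_iff)
qed

lemma trace_self_fun:
  assumes "hermitian_mat n A"
  shows "mtrace n (mmult n A (mat_fun n f A)) = of_real (\<Sum>l<n. f (sdl n A l) * sdl n A l)"
proof -
  have sp: "spectral_decomp n A (sdl n A) (sdv n A)" using sd_spec assms by blast
  show ?thesis unfolding trace_fun
    by (simp add: spec_quad_self[OF sp])
qed

lemma entropy_formula:
  assumes "hermitian_mat n A"
  shows "von_neumann_entropy n A = - (\<Sum>l<n. logs (sdl n A l) * sdl n A l)"
  unfolding von_neumann_entropy_def trace_self_fun[OF assms] by simp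

lemma term_ineq:
  fixes a b P :: real
  assumes "0 \<le> a" "0 \<le> b" "0 \<le> P" "0 < a \<Longrightarrow> 0 < P \<Longrightarrow> 0 < b"
  shows "P * a - P * b \<le> a * P * logs a - a * P * logs b"
proof (cases "a = 0 \<or> P = 0")
  case True
  then show ?thesis using assms by (auto simp: logs_def)
next
  case False
  then have a: "a > 0" and P: "P > 0" using assms by auto
  then have b: "b > 0" using assms(4) by blast
  have "ln (b / a) \<le> b / a - 1" by (rule ln_le_minus_one) (use a b in simp)
  then have "ln b - ln a \<le> b / a - 1" using a b by (simp add: ln_div)
  then have "a * (ln b - ln a) \<le> a * (b / a - 1)" using a by (simp add: mult_left_mono)
  then have "a * ln b - a * ln a \<le> b - a" using a by (simp add: algebra_simps)
  then have "P * (a * ln b - a * ln a) \<le> P * (b - a)" using P by (simp add: mult_left_mono)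
  then show ?thesis using a b by (simp add: logs_def algebra_simps)
qed

lemma klein:
  assumes rho: "density n \<rho>" and sig: "density n \<sigma>"
    and supp: "\<And>l. l < n \<Longrightarrow> sdl n \<sigma> l = 0 \<Longrightarrow> Re (cinner n (sdv n \<sigma> l) (mv n \<rho> (sdv n \<sigma> l))) = 0"
  shows "Re (mtrace n (mmult n \<rho> (mat_fun n logs \<sigma>))) \<le> Re (mtrace n (mmult n \<rho> (mat_fun n logs \<rho>)))"
proof -
  define a where "a = sdl n \<rho>"
  define v where "v = sdv n \<rho>"
  define b where "b = sdl n \<sigma>"
  define w where "w = sdv n \<sigma>"
  have spr: "spectral_decomp n \<rho> a v" unfolding a_def v_def using sd_spec density_herm rho by blast
  have sps: "spectral_decomp n \<sigma> b w" unfolding b_def w_def using sd_spec density_herm sig by blast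
  define P where "P k l = (cmod (cinner n (v k) (w l)))\<^sup>2" for k l
  have a0: "\<And>k. k < n \<Longrightarrow> 0 \<le> a k" unfolding a_def using density_eig_nonneg rho by blast
  have b0: "\<And>k. k < n \<Longrightarrow> 0 \<le> b k" unfolding b_def using density_eig_nonneg sig by blast
  have as: "(\<Sum>k<n. a k) = 1" unfolding a_def using density_eig_sum rho by blast
  have bs: "(\<Sum>k<n. b k) = 1" unfolding b_def using density_eig_sum sig by blast
  have P0: "0 \<le> P k l" for k l unfolding P_def by simp
  have onv: "orthonormal_family n v" and onw: "orthonormal_family n w"
    using spr sps unfolding spectral_decomp_def by auto
  have Pk: "(\<Sum>l<n. P k l) = 1" if "k < n" for k
  proof -
    have "(\<Sum>l<n. P k l) = (\<Sum>l<n. (cmod (cinner n (w l) (v k)))\<^sup>2)"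
      unfolding P_def by (rule sum.cong) (simp_all, metis cinner_cnj complex_mod_cnj)
    also have "\<dots> = Re (cinner n (v k) (v k))" by (rule parseval[OF onw])
    also have "\<dots> = 1" using spec_orth[OF spr that that] by simp
    finally show ?thesis .
  qed
  have Pl: "(\<Sum>k<n. P k l) = 1" if "l < n" for l
  proof -
    have "(\<Sum>k<n. P k l) = Re (cinner n (w l) (w l))" unfolding P_def by (rule parseval[OF onv])
    also have "\<dots> = 1" using spec_orth[OF sps that that] by simp
    finally show ?thesis .
  qed
  have quadw: "Re (cinner n (w l) (mv n \<rho> (w l))) = (\<Sum>k<n. a k * P k l)" for l
    unfolding spec_quad[OF spr] P_def by (simp add: Re_sum)
  have LHS: "Re (mtrace n (mmult n \<rho> (mat_fun n logs \<sigma>))) = (\<Sum>l<n. logs (b l) * (\<Sum>k<n. a k * P k l))"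
    unfolding trace_fun b_def[symmetric] w_def[symmetric] Re_sum
    by (rule sum.cong) (simp_all add: quadw[symmetric])
  have RHS: "Re (mtrace n (mmult n \<rho> (mat_fun n logs \<rho>))) = (\<Sum>k<n. logs (a k) * a k)"
    unfolding trace_self_fun[OF density_herm[OF rho]] a_def by simp
  have pos: "0 < b l" if "k < n" "l < n" "0 < a k" "0 < P k l" for k l
  proof (rule ccontr)
    assume "\<not> 0 < b l"
    then have "b l = 0" using b0[OF that(2)] by linarith
    then have "(\<Sum>k<n. a k * P k l) = 0" using supp[OF that(2)] quadw[of l] unfolding b_def w_def by simp
    moreover have nn: "\<And>k. k \<in> {..<n} \<Longrightarrow> 0 \<le> a k * P k l" using a0 P0 by simp
    ultimately have "\<forall>k\<in>{..<n}. a k * P k l = 0"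
      using sum_nonneg_eq_0_iff[OF finite_lessThan nn] by simp
    then show False using that by force
  qed
  have "(\<Sum>k<n. \<Sum>l<n. P k l * a k - P k l * b l) \<le> (\<Sum>k<n. \<Sum>l<n. a k * P k l * logs (a k) - a k * P k l * logs (b l))"
    by (rule sum_mono, rule sum_mono, rule term_ineq) (use a0 b0 P0 pos in auto)
  moreover have "(\<Sum>k<n. \<Sum>l<n. P k l * a k - P k l * b l) = 0"
  proof -
    have "(\<Sum>k<n. \<Sum>l<n. P k l * a k - P k l * b l) = (\<Sum>k<n. a k * (\<Sum>l<n. P k l)) - (\<Sum>l<n. b l * (\<Sum>k<n. P k l))"
      by (simp add: sum_subtractf sum_distrib_left sum_distrib_right mult_ac) (subst sum.swap, simp)
    also have "\<dots> = 0" using as bs by (simp add: Pk Pl)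
    finally show ?thesis .
  qed
  moreover have "(\<Sum>k<n. \<Sum>l<n. a k * P k l * logs (a k) - a k * P k l * logs (b l))
      = (\<Sum>k<n. logs (a k) * a k) - (\<Sum>l<n. logs (b l) * (\<Sum>k<n. a k * P k l))"
  proof -
    have "(\<Sum>k<n. \<Sum>l<n. a k * P k l * logs (a k) - a k * P k l * logs (b l))
       = (\<Sum>k<n. logs (a k) * a k * (\<Sum>l<n. P k l)) - (\<Sum>k<n. \<Sum>l<n. logs (b l) * (a k * P k l))"
      by (simp add: sum_subtractf sum_distrib_left mult_ac)
    also have "\<dots> = (\<Sum>k<n. logs (a k) * a k) - (\<Sum>l<n. logs (b l) * (\<Sum>k<n. a k * P k l))"
      by (simp add: Pk sum_distrib_left) (subst sum.swap, simp)
    finally show ?thesis .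
  qed
  ultimately show ?thesis unfolding LHS RHS by linarith
qed



lemma decomp_mv:
  assumes fin: "finite K"
    and dec: "\<And>i j. i < n \<Longrightarrow> j < n \<Longrightarrow> A i j = (\<Sum>k\<in>K. of_real (a k) * u k i * cnj (u k j))"
    and i: "i < n"
  shows "mv n A x i = (\<Sum>k\<in>K. of_real (a k) * u k i * cinner n (u k) x)"
proof -
  have "mv n A x i = (\<Sum>j<n. (\<Sum>k\<in>K. of_real (a k) * u k i * cnj (u k j)) * x j)"
    unfolding mv_def by (rule sum.cong) (simp_all add: dec i)
  also have "\<dots> = (\<Sum>k\<in>K. of_real (a k) * u k i * cinner n (u k) x)"
    unfolding cinner_def sum_distrib_right sum_distrib_left
    by (subst sum.swap) (simp add: mult.assoc)
  finally show ?thesis .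
qed

lemma entropy_partial:
  assumes herm: "hermitian_mat n A" and fin: "finite K"
    and orth: "\<And>k k'. k \<in> K \<Longrightarrow> k' \<in> K \<Longrightarrow> cinner n (u k) (u k') = (if k = k' then 1 else 0)"
    and dec: "\<And>i j. i < n \<Longrightarrow> j < n \<Longrightarrow> A i j = (\<Sum>k\<in>K. of_real (a k) * u k i * cnj (u k j))"
  shows "von_neumann_entropy n A = - (\<Sum>k\<in>K. logs (a k) * a k)"
proof -
  define b where "b = sdl n A"
  define w where "w = sdv n A"
  have sp: "spectral_decomp n A b w" unfolding b_def w_def using sd_spec herm by blast
  have onw: "orthonormal_family n w" using sp unfolding spectral_decomp_def by auto
  define c where "c k l = cinner n (u k) (w l)" for k l
  define g where "g x = logs x * x" for x :: real
  have g0: "g 0 = 0" by (simp add: g_def)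
  have rel: "(of_real (a k) - of_real (b l)) * c k l = 0" if k: "k \<in> K" and l: "l < n" for k l
  proof -
    have "cinner n (u k) (mv n A (w l)) = cinner n (u k) (\<lambda>i. of_real (b l) * w l i)"
      by (rule cinner_cong) (simp_all add: spec_eig[OF sp l])
    also have "\<dots> = of_real (b l) * c k l" by (simp add: cinner_scale_right c_def)
    finally have e1: "cinner n (u k) (mv n A (w l)) = of_real (b l) * c k l" .
    have "cinner n (u k) (mv n A (w l)) = cinner n (u k) (\<lambda>i. \<Sum>k'\<in>K. (of_real (a k') * cinner n (u k') (w l)) * u k' i)"
      by (rule cinner_cong) (simp_all add: decomp_mv[OF fin dec] mult_ac)
    also have "\<dots> = (\<Sum>k'\<in>K. of_real (a k') * cinner n (u k') (w l) * cinner n (u k) (u k'))"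
      by (simp add: cinner_sum_right)
    also have "\<dots> = (\<Sum>k'\<in>K. if k' = k then of_real (a k') * cinner n (u k') (w l) else 0)"
      by (rule sum.cong) (simp_all add: orth k)
    also have "\<dots> = of_real (a k) * c k l" using k fin by (simp add: c_def)
    finally have e2: "cinner n (u k) (mv n A (w l)) = of_real (a k) * c k l" .
    show ?thesis using e1 e2 by (simp add: algebra_simps)
  qed
  have eqab: "a k = b l" if "k \<in> K" "l < n" "c k l \<noteq> 0" for k l
    using rel[OF that(1,2)] that(3) by simp
  have quad: "Re (cinner n (w l) (mv n A (w l))) = (\<Sum>k\<in>K. a k * (cmod (c k l))\<^sup>2)" if l: "l < n" for l
  proof -
    have "cinner n (w l) (mv n A (w l)) = cinner n (w l) (\<lambda>i. \<Sum>k\<in>K. (of_real (a k) * c k l) * u k i)"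
      by (rule cinner_cong) (simp_all add: decomp_mv[OF fin dec] mult_ac c_def)
    also have "\<dots> = (\<Sum>k\<in>K. of_real (a k) * c k l * cnj (c k l))"
      by (simp add: cinner_sum_right c_def cinner_cnj[of n "u _" "w l", symmetric])
    finally show ?thesis by (simp add: Re_sum mult.assoc zcnj flip: of_real_power)
  qed
  have sumc: "(\<Sum>k\<in>K. (cmod (c k l))\<^sup>2) = 1" if l: "l < n" "b l \<noteq> 0" for l
  proof -
    have "b l = Re (cinner n (w l) (mv n A (w l)))" using spec_quad_self[OF sp l(1)] by simp
    also have "\<dots> = (\<Sum>k\<in>K. a k * (cmod (c k l))\<^sup>2)" by (rule quad[OF l(1)])
    also have "\<dots> = (\<Sum>k\<in>K. b l * (cmod (c k l))\<^sup>2)"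
      by (rule sum.cong) (auto dest: eqab[OF _ l(1)])
    finally have "b l * 1 = b l * (\<Sum>k\<in>K. (cmod (c k l))\<^sup>2)" by (simp add: sum_distrib_left)
    then show ?thesis using l(2) by simp
  qed
  have "von_neumann_entropy n A = - (\<Sum>l<n. g (b l))"
    unfolding entropy_formula[OF herm] b_def g_def by simp
  also have "(\<Sum>l<n. g (b l)) = (\<Sum>l<n. \<Sum>k\<in>K. g (b l) * (cmod (c k l))\<^sup>2)"
  proof (rule sum.cong[OF refl])
    fix l assume "l \<in> {..<n}"
    then show "g (b l) = (\<Sum>k\<in>K. g (b l) * (cmod (c k l))\<^sup>2)"
      by (cases "b l = 0") (simp_all add: g0 sumc flip: sum_distrib_left)
  qed
  also have "\<dots> = (\<Sum>k\<in>K. \<Sum>l<n. g (a k) * (cmod (c k l))\<^sup>2)"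
    by (subst sum.swap, rule sum.cong[OF refl], rule sum.cong[OF refl]) (auto dest: eqab)
  also have "\<dots> = (\<Sum>k\<in>K. g (a k))"
  proof (rule sum.cong[OF refl])
    fix k assume k: "k \<in> K"
    have "(\<Sum>l<n. (cmod (c k l))\<^sup>2) = (\<Sum>l<n. (cmod (cinner n (w l) (u k)))\<^sup>2)"
      unfolding c_def by (rule sum.cong) (simp_all, metis cinner_cnj complex_mod_cnj)
    also have "\<dots> = Re (cinner n (u k) (u k))" by (rule parseval[OF onw])
    also have "\<dots> = 1" using orth[OF k k] by simp
    finally show "(\<Sum>l<n. g (a k) * (cmod (c k l))\<^sup>2) = g (a k)"
      by (simp flip: sum_distrib_left)
  qed
  finally show ?thesis by (simp add: g_def)
qed



lemma sum_reorder3: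
  "(\<Sum>j\<in>A. \<Sum>i\<in>B. \<Sum>c\<in>C. f j i c) = (\<Sum>c\<in>C. \<Sum>i\<in>B. \<Sum>j\<in>A. f j i c)"
proof -
  have "(\<Sum>j\<in>A. \<Sum>i\<in>B. \<Sum>c\<in>C. f j i c) = (\<Sum>j\<in>A. \<Sum>c\<in>C. \<Sum>i\<in>B. f j i c)"
    by (rule sum.cong[OF refl], rule sum.swap)
  also have "\<dots> = (\<Sum>c\<in>C. \<Sum>j\<in>A. \<Sum>i\<in>B. f j i c)" by (rule sum.swap)
  also have "\<dots> = (\<Sum>c\<in>C. \<Sum>i\<in>B. \<Sum>j\<in>A. f j i c)"
    by (rule sum.cong[OF refl], rule sum.swap)
  finally show ?thesis .
qed

lemma gram_herm: "hermitian_mat m (\<lambda>i j. \<Sum>c<p. M i c * cnj (M j c))"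
  unfolding hermitian_mat_def by (simp add: mult.commute)

lemma gram_herm2: "hermitian_mat p (\<lambda>c c'. \<Sum>i<m. M i c * cnj (M i c'))"
  unfolding hermitian_mat_def by (simp add: mult.commute)

lemma gram_entropy:
  fixes M :: "nat \<Rightarrow> nat \<Rightarrow> complex"
  shows "von_neumann_entropy m (\<lambda>i j. \<Sum>c<p. M i c * cnj (M j c))
       = von_neumann_entropy p (\<lambda>c c'. \<Sum>i<m. M i c * cnj (M i c'))"
proof -
  define R1 where "R1 = (\<lambda>i j. \<Sum>c<p. M i c * cnj (M j c))"
  define R2 where "R2 = (\<lambda>c c'. \<Sum>i<m. M i c * cnj (M i c'))"
  have h1: "hermitian_mat m R1" unfolding R1_def by (rule gram_herm)
  have h2: "hermitian_mat p R2" unfolding R2_def by (rule gram_herm2)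
  define a where "a = sdl m R1"
  define v where "v = sdv m R1"
  have sp: "spectral_decomp m R1 a v" unfolding a_def v_def using sd_spec h1 by blast
  have onv: "orthonormal_family m v" using sp unfolding spectral_decomp_def by auto
  define y where "y k c = (\<Sum>i<m. M i c * cnj (v k i))" for k c
  have yy: "cinner p (y k) (y l) = cinner m (v l) (mv m R1 (v k))" for k l
  proof -
    have "cinner p (y k) (y l) = (\<Sum>c<p. \<Sum>i<m. \<Sum>j<m. cnj (v l j) * M j c * cnj (M i c) * v k i)"
      unfolding cinner_def y_def cnj_sum sum_product
      by (rule sum.cong[OF refl], rule sum.cong[OF refl], rule sum.cong[OF refl]) (simp add: mult_ac)
    also have "\<dots> = (\<Sum>j<m. \<Sum>i<m. \<Sum>c<p. cnj (v l j) * M j c * cnj (M i c) * v k i)"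
      by (rule sum_reorder3[symmetric])
    also have "\<dots> = cinner m (v l) (mv m R1 (v k))"
      unfolding cinner_def mv_def R1_def sum_distrib_left sum_distrib_right
      by (rule sum.cong[OF refl], rule sum.cong[OF refl], rule sum.cong[OF refl]) (simp add: mult_ac)
    finally show ?thesis .
  qed
  have yy2: "cinner p (y k) (y l) = (if k = l then of_real (a k) else 0)" if "k < m" "l < m" for k l
  proof -
    have "cinner m (v l) (mv m R1 (v k)) = cinner m (v l) (\<lambda>i. of_real (a k) * v k i)"
      by (rule cinner_cong) (simp_all add: spec_eig[OF sp that(1)])
    then show ?thesis using yy spec_orth[OF sp that(2) that(1)] by (simp add: cinner_scale_right)
  qed
  have a0: "0 \<le> a k" if "k < m" for k
    using yy2[OF that that] cinner_self_ge0[of p "y k"] by simp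
  define K where "K = {k. k < m \<and> a k \<noteq> 0}"
  have finK: "finite K" unfolding K_def by simp
  define u where "u k c = of_real (1 / sqrt (a k)) * y k c" for k c
  have orthu: "cinner p (u k) (u k') = (if k = k' then 1 else 0)" if "k \<in> K" "k' \<in> K" for k k'
  proof -
    have km: "k < m" "k' < m" and ak: "a k > 0" using that a0 unfolding K_def by (auto simp: less_le)
    have "cinner p (u k) (u k') = of_real (1 / sqrt (a k)) * of_real (1 / sqrt (a k')) * cinner p (y k) (y k')"
      unfolding u_def cinner_scale_left cinner_scale_right by simp
    also have "\<dots> = (if k = k' then 1 else 0)"
    proof (cases "k = k'")
      case True
      have r: "1 / sqrt (a k) * (1 / sqrt (a k)) * a k = 1" using ak by (simp add: field_simps)
      have "complex_of_real (1 / sqrt (a k)) * complex_of_real (1 / sqrt (a k)) * complex_of_real (a k) = 1"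
        unfolding of_real_mult[symmetric] r by simp
      then show ?thesis using True yy2[OF km(1) km(1)] by simp
    next
      case False
      then show ?thesis using yy2[OF km] by simp
    qed
    finally show ?thesis .
  qed
  have y0: "y k c = 0" if "k < m" "a k = 0" "c < p" for k c
    using cinner_self_eq0[of p "y k" c] yy2[OF that(1) that(1)] that by simp
  have decR2: "R2 c c' = (\<Sum>k\<in>K. of_real (a k) * u k c * cnj (u k c'))" if "c < p" "c' < p" for c c'
  proof -
    have "(\<Sum>k\<in>K. of_real (a k) * u k c * cnj (u k c')) = (\<Sum>k\<in>K. y k c * cnj (y k c'))"
    proof (rule sum.cong[OF refl])
      fix k assume "k \<in> K"
      then have ak: "a k > 0" using a0 unfolding K_def by (auto simp: less_le)
      have "of_real (a k) * (of_real (1 / sqrt (a k)) * y k c) * cnj (of_real (1 / sqrt (a k)) * y k c')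
          = of_real (a k * (1 / sqrt (a k)) * (1 / sqrt (a k))) * (y k c * cnj (y k c'))"
        by (simp only: complex_cnj_mult complex_cnj_complex_of_real of_real_mult mult_ac)
      also have "a k * (1 / sqrt (a k)) * (1 / sqrt (a k)) = 1" using ak
        by (simp add: field_simps)
      finally show "of_real (a k) * u k c * cnj (u k c') = y k c * cnj (y k c')" by (simp add: u_def)
    qed
    also have "\<dots> = (\<Sum>k<m. y k c * cnj (y k c'))"
      by (rule sum.mono_neutral_left) (auto simp: K_def y0 that)
    also have "\<dots> = (\<Sum>k<m. \<Sum>i<m. \<Sum>j<m. M i c * cnj (M j c') * (v k j * cnj (v k i)))"
      unfolding y_def cnj_sum sum_product
      by (rule sum.cong[OF refl], rule sum.cong[OF refl], rule sum.cong[OF refl]) (simp add: mult_ac)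
    also have "\<dots> = (\<Sum>j<m. \<Sum>i<m. \<Sum>k<m. M i c * cnj (M j c') * (v k j * cnj (v k i)))"
      by (rule sum_reorder3)
    also have "\<dots> = (\<Sum>j<m. \<Sum>i<m. M i c * cnj (M j c') * (if j = i then 1 else 0))"
      unfolding sum_distrib_left[symmetric]
      by (rule sum.cong[OF refl], rule sum.cong[OF refl]) (simp add: orthonormal_complete[OF onv])
    also have "\<dots> = (\<Sum>j<m. M j c * cnj (M j c'))"
      by (rule sum.cong[OF refl]) (simp add: if_distrib sum.delta' cong: if_cong)
    finally show ?thesis unfolding R2_def by simp
  qed
  have "von_neumann_entropy p R2 = - (\<Sum>k\<in>K. logs (a k) * a k)"
    by (rule entropy_partial[OF h2 finK orthu decR2])
  also have "(\<Sum>k\<in>K. logs (a k) * a k) = (\<Sum>k<m. logs (a k) * a k)"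
    by (rule sum.mono_neutral_left) (auto simp: K_def)
  also have "- \<dots> = von_neumann_entropy m R1"
    unfolding entropy_formula[OF h1] a_def by simp
  finally show ?thesis unfolding R1_def R2_def by simp
qed



lemma expand_onb:
  assumes on: "orthonormal_family n w" and i: "i < n"
  shows "x i = (\<Sum>l<n. cinner n (w l) x * w l i)"
proof -
  have "(\<Sum>l<n. cinner n (w l) x * w l i) = (\<Sum>l<n. \<Sum>j<n. x j * (w l i * cnj (w l j)))"
    unfolding cinner_def sum_distrib_right by (rule sum.cong[OF refl], rule sum.cong[OF refl]) (simp add: mult_ac)
  also have "\<dots> = (\<Sum>j<n. x j * (\<Sum>l<n. w l i * cnj (w l j)))"
    unfolding sum_distrib_left by (rule sum.swap)
  also have "\<dots> = (\<Sum>j<n. if j = i then x j else 0)"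
    by (rule sum.cong[OF refl]) (auto simp: orthonormal_complete[OF on i])
  also have "\<dots> = x i" using i by (simp add: sum.delta')
  finally show ?thesis by simp
qed

lemma fun_commute_diag:
  assumes herm: "hermitian_mat n S"
    and comm: "\<And>r s. r < n \<Longrightarrow> s < n \<Longrightarrow> S r s * of_real (h s) = of_real (h r) * S r s"
    and r: "r < n" and s: "s < n"
  shows "mat_fun n f S r s * of_real (h s) = of_real (h r) * mat_fun n f S r s"
proof -
  define b where "b = sdl n S"
  define w where "w = sdv n S"
  have sp: "spectral_decomp n S b w" unfolding b_def w_def using sd_spec herm by blast
  have on: "orthonormal_family n w" using sp unfolding spectral_decomp_def by auto
  define D where "D x = (\<lambda>i. of_real (h i) * x i)" for x :: cvec
  define C where "C l l' = cinner n (w l) (D (w l'))" for l l'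
  have F1: "of_real (f (b l)) * C l l' = of_real (f (b l')) * C l l'" if l: "l < n" and l': "l' < n" for l l'
  proof -
    have "cinner n (w l) (mv n S (D (w l'))) = cinner n (mv n S (w l)) (D (w l'))" by (rule herm_adj[OF herm])
    also have "\<dots> = cinner n (\<lambda>i. of_real (b l) * w l i) (D (w l'))"
      by (rule cinner_cong) (simp_all add: spec_eig[OF sp l])
    also have "\<dots> = of_real (b l) * C l l'" by (simp add: cinner_scale_left C_def)
    finally have e1: "cinner n (w l) (mv n S (D (w l'))) = of_real (b l) * C l l'" .
    have mvD: "mv n S (D (w l')) i = of_real (b l') * D (w l') i" if "i < n" for i
    proof -
      have "mv n S (D (w l')) i = (\<Sum>j<n. of_real (h i) * (S i j * w l' j))"
        unfolding mv_def D_def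
      proof (rule sum.cong[OF refl])
        fix j assume "j \<in> {..<n}"
        then have "S i j * of_real (h j) = of_real (h i) * S i j" using comm[OF that] by simp
        then show "S i j * (of_real (h j) * w l' j) = of_real (h i) * (S i j * w l' j)"
          by (metis mult.assoc)
      qed
      also have "\<dots> = of_real (h i) * mv n S (w l') i" by (simp add: mv_def sum_distrib_left)
      also have "\<dots> = of_real (b l') * D (w l') i" using spec_eig[OF sp l' that] by (simp add: D_def)
      finally show ?thesis .
    qed
    have "cinner n (w l) (mv n S (D (w l'))) = cinner n (w l) (\<lambda>i. of_real (b l') * D (w l') i)"
      by (rule cinner_cong) (simp_all add: mvD)
    also have "\<dots> = of_real (b l') * C l l'" by (simp add: cinner_scale_right C_def)
    finally have e2: "cinner n (w l) (mv n S (D (w l'))) = of_real (b l') * C l l'" .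
    have "of_real (b l) * C l l' = of_real (b l') * C l l'" using e1 e2 by metis
    then have "(of_real (b l) - of_real (b l')) * C l l' = 0" by (simp add: left_diff_distrib)
    then have "b l = b l' \<or> C l l' = 0" by auto
    then show ?thesis by auto
  qed
  have Ccnj: "cnj (C l' l) = C l l'" for l l'
    unfolding C_def D_def cinner_def cnj_sum by (rule sum.cong[OF refl]) (simp add: mult_ac)
  have "mat_fun n f S r s * of_real (h s) = (\<Sum>l<n. of_real (f (b l)) * w l r * cnj (D (w l) s))"
    unfolding mat_fun_sd b_def[symmetric] w_def[symmetric] D_def sum_distrib_right
    by (rule sum.cong[OF refl]) (simp add: mult_ac)
  also have "\<dots> = (\<Sum>l<n. of_real (f (b l)) * w l r * cnj (\<Sum>l'<n. C l' l * w l' s))"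
    by (rule sum.cong[OF refl]) (simp add: C_def expand_onb[OF on s, symmetric])
  also have "\<dots> = (\<Sum>l<n. \<Sum>l'<n. of_real (f (b l)) * C l l' * w l r * cnj (w l' s))"
    unfolding cnj_sum sum_distrib_left by (rule sum.cong[OF refl], rule sum.cong[OF refl]) (simp add: Ccnj mult_ac)
  also have "\<dots> = (\<Sum>l<n. \<Sum>l'<n. of_real (f (b l')) * C l l' * w l r * cnj (w l' s))"
  proof (rule sum.cong[OF refl], rule sum.cong[OF refl])
    fix l l' assume "l \<in> {..<n}" "l' \<in> {..<n}"
    then have "of_real (f (b l)) * C l l' = of_real (f (b l')) * C l l'" using F1 by simp
    then show "of_real (f (b l)) * C l l' * w l r * cnj (w l' s) = of_real (f (b l')) * C l l' * w l r * cnj (w l' s)"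
      by (simp only:)
  qed
  also have "\<dots> = (\<Sum>l'<n. \<Sum>l<n. of_real (f (b l')) * C l l' * w l r * cnj (w l' s))"
    by (rule sum.swap)
  also have "\<dots> = (\<Sum>l'<n. of_real (f (b l')) * (\<Sum>l<n. C l l' * w l r) * cnj (w l' s))"
    unfolding sum_distrib_left sum_distrib_right by (rule sum.cong[OF refl], rule sum.cong[OF refl]) (simp add: mult_ac)
  also have "\<dots> = (\<Sum>l'<n. of_real (f (b l')) * D (w l') r * cnj (w l' s))"
    by (rule sum.cong[OF refl]) (simp add: C_def expand_onb[OF on r, symmetric])
  also have "\<dots> = of_real (h r) * mat_fun n f S r s"
    unfolding mat_fun_sd b_def[symmetric] w_def[symmetric] D_def sum_distrib_left
    by (rule sum.cong[OF refl]) (simp add: mult_ac)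
  finally show ?thesis .
qed



definition deph :: "nat \<Rightarrow> cmat \<Rightarrow> cmat" where
  "deph dX \<rho> = (\<lambda>r s. if r div dX = s div dX then \<rho> r s else 0)"

definition blockdiag :: "nat \<Rightarrow> nat \<Rightarrow> cmat \<Rightarrow> bool" where
  "blockdiag n dX B \<longleftrightarrow> (\<forall>r<n. \<forall>s<n. r div dX \<noteq> s div dX \<longrightarrow> B r s = 0)"

definition restr :: "nat \<Rightarrow> nat \<Rightarrow> cvec \<Rightarrow> cvec" where
  "restr dX a x = (\<lambda>i. if i div dX = a then x i else 0)"

lemma fun_blockdiag:
  assumes herm: "hermitian_mat n S" and bd: "blockdiag n dX S"
  shows "blockdiag n dX (mat_fun n f S)"
  unfolding blockdiag_def
proof (intro allI impI)
  fix r s assume r: "r < n" and s: "s < n" and ne: "r div dX \<noteq> s div dX"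
  define h where "h i = (if i div dX = r div dX then 1 else 0 :: real)" for i
  have comm: "S r' s' * of_real (h s') = of_real (h r') * S r' s'" if "r' < n" "s' < n" for r' s'
    using bd that unfolding blockdiag_def h_def by auto
  have "mat_fun n f S r s * of_real (h s) = of_real (h r) * mat_fun n f S r s"
    by (rule fun_commute_diag[OF herm comm r s])
  then show "mat_fun n f S r s = 0" using ne by (simp add: h_def)
qed

lemma trace_deph:
  assumes bd: "blockdiag n dX F"
  shows "mtrace n (mmult n \<rho> F) = mtrace n (mmult n (deph dX \<rho>) F)"
  unfolding mtrace_def mmult_def
proof (rule sum.cong[OF refl], rule sum.cong[OF refl])
  fix r k assume r: "r \<in> {..<n}" and k: "k \<in> {..<n}"
  show "\<rho> r k * F k r = deph dX \<rho> r k * F k r"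
  proof (cases "r div dX = k div dX")
    case True then show ?thesis by (simp add: deph_def)
  next
    case False
    then have "F k r = 0" using bd r k unfolding blockdiag_def by simp
    then show ?thesis by simp
  qed
qed

lemma deph_blockdiag: "blockdiag n dX (deph dX \<rho>)"
  unfolding blockdiag_def deph_def by auto

lemma deph_herm: assumes "hermitian_mat n \<rho>" shows "hermitian_mat n (deph dX \<rho>)"
  unfolding hermitian_mat_def
proof (intro allI impI)
  fix i j assume "i < n" "j < n"
  then have "\<rho> j i = cnj (\<rho> i j)" using assms unfolding hermitian_mat_def by blast
  then show "deph dX \<rho> j i = cnj (deph dX \<rho> i j)" by (simp add: deph_def)
qed

lemma mv_restr_bd:
  assumes bd: "blockdiag n dX B" and r: "r < n"
  shows "mv n B (restr dX a x) r = (if r div dX = a then mv n B x r else 0)"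
proof (cases "r div dX = a")
  case True
  show ?thesis unfolding mv_def restr_def using True
    by (auto intro!: sum.cong simp: bd[unfolded blockdiag_def, rule_format, OF r])
next
  case False
  have "(\<Sum>j<n. B r j * (if j div dX = a then x j else 0)) = 0"
    by (rule sum.neutral) (use False bd r in \<open>auto simp: blockdiag_def\<close>)
  then show ?thesis using False unfolding mv_def restr_def by simp
qed

lemma mv_deph_restr:
  "mv n (deph dX \<rho>) (restr dX a x) r = (if r div dX = a then mv n \<rho> (restr dX a x) r else 0)"
proof (cases "r div dX = a")
  case True
  then show ?thesis unfolding mv_def restr_def deph_def by (auto intro!: sum.cong)
next
  case False
  have "(\<Sum>j<n. (if r div dX = j div dX then \<rho> r j else 0) * (if j div dX = a then x j else 0)) = 0"
    by (rule sum.neutral) (use False in auto)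
  then show ?thesis using False unfolding mv_def restr_def deph_def by simp
qed

lemma sum_restr:
  assumes "i < dA * dX" shows "(\<Sum>a<dA. restr dX a x i) = x i"
proof -
  have "i div dX < dA" using assms by (simp add: less_mult_imp_div_less)
  then show ?thesis unfolding restr_def by (simp add: sum.delta)
qed

lemma mv_sum_vec: "mv n B (\<lambda>i. \<Sum>a\<in>A. f a i) r = (\<Sum>a\<in>A. mv n B (f a) r)"
  unfolding mv_def sum_distrib_left by (rule sum.swap)

lemma mv_split:
  assumes r: "True" 
  shows "mv (dA * dX) B x r = (\<Sum>a<dA. mv (dA * dX) B (restr dX a x) r)"
proof -
  have "mv (dA * dX) B x r = mv (dA * dX) B (\<lambda>i. \<Sum>a<dA. restr dX a x i) r"
    by (subst mv_cong[of "dA * dX" x "\<lambda>i. \<Sum>a<dA. restr dX a x i"]) (simp_all add: sum_restr)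
  also have "\<dots> = (\<Sum>a<dA. mv (dA * dX) B (restr dX a x) r)" by (rule mv_sum_vec)
  finally show ?thesis .
qed

lemma cinner_zero_right: "(\<And>i. i < n \<Longrightarrow> z i = 0) \<Longrightarrow> cinner n y z = 0"
  unfolding cinner_def by (rule sum.neutral) auto

lemma density_kernel:
  assumes rho: "density n \<rho>" and q: "Re (cinner n x (mv n \<rho> x)) = 0" and i: "i < n"
  shows "mv n \<rho> x i = 0"
proof -
  define a where "a = sdl n \<rho>"
  define v where "v = sdv n \<rho>"
  have sp: "spectral_decomp n \<rho> a v" unfolding a_def v_def using sd_spec density_herm rho by blast
  have a0: "\<And>k. k < n \<Longrightarrow> 0 \<le> a k" unfolding a_def using density_eig_nonneg rho by blast
  have "(\<Sum>k<n. a k * (cmod (cinner n (v k) x))\<^sup>2) = 0"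
    using q unfolding spec_quad[OF sp] by (simp add: Re_sum)
  then have "\<forall>k\<in>{..<n}. a k * (cmod (cinner n (v k) x))\<^sup>2 = 0"
    using sum_nonneg_eq_0_iff[of "{..<n}" "\<lambda>k. a k * (cmod (cinner n (v k) x))\<^sup>2"] a0 by simp
  then have z: "\<And>k. k < n \<Longrightarrow> of_real (a k) * cinner n (v k) x = 0" by auto
  show ?thesis unfolding spec_mv'[OF sp i]
    by (rule sum.neutral) (use z in \<open>auto simp: mult_ac\<close>)
qed

lemma quad_restr_deph:
  "cinner n (restr dX a x) (mv n \<rho> (restr dX a x)) = cinner n (restr dX a x) (mv n (deph dX \<rho>) (restr dX a x))"
  unfolding cinner_def
proof (rule sum.cong[OF refl])
  fix i
  show "cnj (restr dX a x i) * mv n \<rho> (restr dX a x) i = cnj (restr dX a x i) * mv n (deph dX \<rho>) (restr dX a x) i"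
    by (cases "i div dX = a") (simp_all add: mv_deph_restr, simp add: restr_def)
qed

lemma supp_deph:
  assumes rho: "density (dA * dX) \<rho>"
  shows "supp_le (dA * dX) \<rho> (deph dX \<rho>)"
  unfolding supp_le_def
proof (intro allI impI)
  let ?n = "dA * dX"
  fix x assume ker: "\<forall>i<?n. (\<Sum>j<?n. deph dX \<rho> i j * x j) = 0"
  have kerD: "mv ?n (deph dX \<rho>) x i = 0" if "i < ?n" for i using ker that by (simp add: mv_def)
  have blk: "mv ?n \<rho> (restr dX a x) i = 0" if "i < ?n" for a i
  proof -
    have "mv ?n (deph dX \<rho>) (restr dX a x) r = 0" if "r < ?n" for r
      using mv_restr_bd[OF deph_blockdiag that] kerD[OF that] by simp
    then have "cinner ?n (restr dX a x) (mv ?n (deph dX \<rho>) (restr dX a x)) = 0"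
      by (rule cinner_zero_right)
    moreover have "cinner ?n (restr dX a x) (mv ?n \<rho> (restr dX a x)) = cinner ?n (restr dX a x) (mv ?n (deph dX \<rho>) (restr dX a x))"
      by (rule quad_restr_deph)
    ultimately have "Re (cinner ?n (restr dX a x) (mv ?n \<rho> (restr dX a x))) = 0"
      by simp
    then show ?thesis by (rule density_kernel[OF rho _ that])
  qed
  fix i assume i: "i < ?n"
  have "mv ?n \<rho> x i = (\<Sum>a<dA. mv ?n \<rho> (restr dX a x) i)" by (rule mv_split) simp
  also have "\<dots> = 0" by (rule sum.neutral) (simp add: blk i)
  finally have "mv ?n \<rho> x i = 0" .
  then show "(\<Sum>j<?n. \<rho> i j * x j) = 0" by (simp add: mv_def)
qed

lemma klein_supp:
  assumes rho: "density (dA * dX) \<rho>" and bd: "blockdiag (dA * dX) dX S"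
    and supp: "supp_le (dA * dX) \<rho> S"
    and w: "\<And>i. i < dA * dX \<Longrightarrow> mv (dA * dX) S w i = 0"
  shows "Re (cinner (dA * dX) w (mv (dA * dX) (deph dX \<rho>) w)) = 0"
proof -
  let ?n = "dA * dX"
  have "mv ?n \<rho> (restr dX a w) i = 0" if "i < ?n" for a i
  proof -
    have "\<forall>i<?n. (\<Sum>j<?n. S i j * restr dX a w j) = 0"
    proof (intro allI impI)
      fix i assume i: "i < ?n"
      have "(\<Sum>j<?n. S i j * restr dX a w j) = mv ?n S (restr dX a w) i" by (simp add: mv_def)
      also have "\<dots> = 0" using mv_restr_bd[OF bd i] w[OF i] by simp
      finally show "(\<Sum>j<?n. S i j * restr dX a w j) = 0" .
    qed
    moreover have "(\<forall>i<?n. (\<Sum>j<?n. S i j * restr dX a w j) = 0) \<longrightarrow> (\<forall>i<?n. (\<Sum>j<?n. \<rho> i j * restr dX a w j) = 0)"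
      using supp unfolding supp_le_def by (rule spec)
    ultimately have "\<forall>i<?n. (\<Sum>j<?n. \<rho> i j * restr dX a w j) = 0" by (rule rev_mp)
    then show ?thesis using that by (simp add: mv_def)
  qed
  then have rz: "mv ?n \<rho> (restr dX a w) i = 0" if "i < ?n" for a i using that by blast
  have "mv ?n (deph dX \<rho>) w i = 0" if "i < ?n" for i
  proof -
    have "mv ?n (deph dX \<rho>) w i = (\<Sum>a<dA. mv ?n (deph dX \<rho>) (restr dX a w) i)" by (rule mv_split) simp
    also have "\<dots> = 0" by (rule sum.neutral) (simp add: mv_deph_restr that rz)
    finally show ?thesis .
  qed
  then have "cinner ?n w (mv ?n (deph dX \<rho>) w) = 0" by (rule cinner_zero_right)
  then show ?thesis by simp
qed



lemma sum_blocks: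
  fixes h :: "nat \<Rightarrow> 'a::comm_monoid_add"
  shows "(\<Sum>r<dA * dX. h r) = (\<Sum>a<dA. \<Sum>c<dX. h (c + a * dX))"
  by (rule sum_mult_product)

lemma divmod_blk [simp]: fixes c a dX :: nat shows "c < dX \<Longrightarrow> (c + a * dX) div dX = a" "c < dX \<Longrightarrow> (c + a * dX) mod dX = c"
  by simp_all

lemma quad_basis: fixes n :: nat assumes "a < n" shows "(\<Sum>i<n. \<Sum>j<n. cnj (if i = a then 1 else 0) * A i j * (if j = a then 1 else 0)) = A a a"
proof -
  have "(\<Sum>i<n. \<Sum>j<n. cnj (if i = a then 1 else 0) * A i j * (if j = a then 1 else 0))
     = (\<Sum>i<n. if i = a then (\<Sum>j<n. if j = a then A i j else 0) else 0)"
  proof (rule sum.cong[OF refl])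
    fix i
    have "(\<Sum>j<n. cnj (if i = a then 1 else 0) * A i j * (if j = a then 1 else 0)) = (\<Sum>j<n. if j = a then cnj (if i = a then 1 else 0) * A i j else 0)"
      by (rule sum.cong) auto
    also have "\<dots> = (if i = a then (\<Sum>j<n. if j = a then A i j else 0) else 0)"
      by (cases "i = a") simp_all
    finally show "(\<Sum>j<n. cnj (if i = a then 1 else 0) * A i j * (if j = a then 1 else 0)) = (if i = a then (\<Sum>j<n. if j = a then A i j else 0) else 0)" .
  qed
  also have "\<dots> = A a a" using assms by (simp add: sum.delta)
  finally show ?thesis .
qed

lemma herm_diag_real: assumes "hermitian_mat n A" "a < n" shows "A a a = of_real (Re (A a a))"
proof -
  have "A a a = cnj (A a a)" using assms unfolding hermitian_mat_def by blast
  then have "Im (A a a) = 0" by (metis cnj.simps(2) neg_equal_zero)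
  then show ?thesis by (simp add: complex_eq_iff)
qed

lemma psd_diag_nonneg: assumes "psd_mat n A" "a < n" shows "0 \<le> Re (A a a)"
proof -
  have "\<forall>x. 0 \<le> Re (\<Sum>i<n. \<Sum>j<n. cnj (x i) * A i j * x j)"
    using assms(1) unfolding psd_mat_def by blast
  then have "0 \<le> Re (\<Sum>i<n. \<Sum>j<n. cnj ((\<lambda>i. if i = a then 1 else 0) i) * A i j * (\<lambda>i. if i = a then 1 else 0) j)"
    by (rule spec)
  then show ?thesis using quad_basis[OF assms(2), of A] by simp
qed

lemma spec_entry: "spectral_decomp n A lam v \<Longrightarrow> i < n \<Longrightarrow> j < n \<Longrightarrow>
  A i j = (\<Sum>k<n. of_real (lam k) * v k i * cnj (v k j))"
  unfolding spectral_decomp_def by blast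

lemma density_zero_row:
  assumes rho: "density n \<rho>" and i: "i < n" and j: "j < n" and z: "\<rho> i i = 0"
  shows "\<rho> i j = 0"
proof -
  define a where "a = sdl n \<rho>"
  define v where "v = sdv n \<rho>"
  have sp: "spectral_decomp n \<rho> a v" unfolding a_def v_def using sd_spec density_herm rho by blast
  have a0: "\<And>k. k < n \<Longrightarrow> 0 \<le> a k" unfolding a_def using density_eig_nonneg rho by blast
  have "\<rho> i i = (\<Sum>k<n. of_real (a k) * v k i * cnj (v k i))" by (rule spec_entry[OF sp i i])
  also have "\<dots> = of_real (\<Sum>k<n. a k * (cmod (v k i))\<^sup>2)"
    unfolding of_real_sum by (rule sum.cong[OF refl]) (simp only: of_real_mult complex_norm_square mult.assoc)
  finally have eq: "\<rho> i i = complex_of_real (\<Sum>k<n. a k * (cmod (v k i))\<^sup>2)" .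
  have "complex_of_real (\<Sum>k<n. a k * (cmod (v k i))\<^sup>2) = 0" using eq z by metis
  then have "(\<Sum>k<n. a k * (cmod (v k i))\<^sup>2) = 0" by (simp only: of_real_eq_0_iff)
  moreover have "(\<Sum>k<n. a k * (cmod (v k i))\<^sup>2) = 0 \<longleftrightarrow> (\<forall>k\<in>{..<n}. a k * (cmod (v k i))\<^sup>2 = 0)"
    by (rule sum_nonneg_eq_0_iff[OF finite_lessThan]) (use a0 in simp)
  ultimately have "\<forall>k\<in>{..<n}. a k * (cmod (v k i))\<^sup>2 = 0" by simp
  then have zz: "of_real (a k) * v k i = 0" if "k < n" for k
  proof -
    have "a k * (cmod (v k i))\<^sup>2 = 0" using \<open>\<forall>k\<in>{..<n}. _\<close> that by simp
    then have "a k = 0 \<or> v k i = 0" by simp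
    then show ?thesis by auto
  qed
  have "\<rho> i j = (\<Sum>k<n. of_real (a k) * v k i * cnj (v k j))" by (rule spec_entry[OF sp i j])
  also have "\<dots> = 0"
  proof (rule sum.neutral, rule ballI)
    fix k assume "k \<in> {..<n}"
    then have "of_real (a k) * v k i = 0" using zz by simp
    then show "of_real (a k) * v k i * cnj (v k j) = 0" by simp
  qed
  finally show ?thesis .
qed

lemma incoh_facts:
  assumes inc: "incoherent dA s"
  shows "\<And>a. a < dA \<Longrightarrow> s a a = of_real (Re (s a a))"
    "\<And>a. a < dA \<Longrightarrow> 0 \<le> Re (s a a)"
    "(\<Sum>a<dA. s a a) = 1"
    "\<And>a b. a < dA \<Longrightarrow> b < dA \<Longrightarrow> a \<noteq> b \<Longrightarrow> s a b = 0"
proof -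
  have d: "density dA s" using inc unfolding incoherent_def by blast
  show "\<And>a. a < dA \<Longrightarrow> s a a = of_real (Re (s a a))" using herm_diag_real density_herm[OF d] by blast
  show "\<And>a. a < dA \<Longrightarrow> 0 \<le> Re (s a a)" using psd_diag_nonneg d unfolding density_def by blast
  show "(\<Sum>a<dA. s a a) = 1" using d unfolding density_def mtrace_def by blast
  show "\<And>a b. a < dA \<Longrightarrow> b < dA \<Longrightarrow> a \<noteq> b \<Longrightarrow> s a b = 0" using inc unfolding incoherent_def by blast
qed



lemma div_lt: fixes r dA dX :: nat shows "r < dA * dX \<Longrightarrow> r div dX < dA"
  by (simp add: less_mult_imp_div_less)

lemma mod_lt: fixes r dX :: nat shows "0 < dX \<Longrightarrow> r mod dX < dX"
  by simp

lemma herm_entry: "hermitian_mat n A \<Longrightarrow> i < n \<Longrightarrow> j < n \<Longrightarrow> A j i = cnj (A i j)"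
  unfolding hermitian_mat_def by blast

lemma psd_form: "psd_mat n A \<Longrightarrow> 0 \<le> Re (\<Sum>i<n. \<Sum>j<n. cnj (x i) * A i j * x j)"
  unfolding psd_mat_def by blast

lemma kron_quad:
  assumes inc: "incoherent dA s" and t: "density dX t" and dX: "0 < dX"
  shows "0 \<le> Re (\<Sum>r<dA * dX. \<Sum>r'<dA * dX. cnj (x r) * kron dX s t r r' * x r')"
proof -
  note sf = incoh_facts[OF inc]
  define y where "y a c = x (c + a * dX)" for a c
  define q where "q a = (\<Sum>c<dX. \<Sum>c'<dX. cnj (y a c) * t c c' * y a c')" for a
  have inner: "(\<Sum>r'<dA * dX. cnj (x r) * kron dX s t r r' * x r')
      = (\<Sum>c'<dX. cnj (x r) * s (r div dX) (r div dX) * t (r mod dX) c' * y (r div dX) c')"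
    if r: "r < dA * dX" for r
  proof -
    have rd: "r div dX < dA" using div_lt[OF r] .
    have "(\<Sum>r'<dA * dX. cnj (x r) * kron dX s t r r' * x r')
        = (\<Sum>a'<dA. \<Sum>c'<dX. cnj (x r) * kron dX s t r (c' + a' * dX) * x (c' + a' * dX))"
      by (rule sum_blocks)
    also have "\<dots> = (\<Sum>a'<dA. if a' = r div dX then (\<Sum>c'<dX. cnj (x r) * s (r div dX) (r div dX) * t (r mod dX) c' * y (r div dX) c') else 0)"
    proof (rule sum.cong[OF refl])
      fix a' assume a': "a' \<in> {..<dA}"
      show "(\<Sum>c'<dX. cnj (x r) * kron dX s t r (c' + a' * dX) * x (c' + a' * dX)) =
        (if a' = r div dX then (\<Sum>c'<dX. cnj (x r) * s (r div dX) (r div dX) * t (r mod dX) c' * y (r div dX) c') else 0)"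
      proof (cases "a' = r div dX")
        case True
        then have "(\<Sum>c'<dX. cnj (x r) * kron dX s t r (c' + a' * dX) * x (c' + a' * dX))
          = (\<Sum>c'<dX. cnj (x r) * s (r div dX) (r div dX) * t (r mod dX) c' * y (r div dX) c')"
          unfolding kron_def y_def by (intro sum.cong refl) simp
        then show ?thesis using True by simp
      next
        case False
        have "s (r div dX) a' = 0" using sf(4)[OF rd _ ] a' False by simp
        then have "(\<Sum>c'<dX. cnj (x r) * kron dX s t r (c' + a' * dX) * x (c' + a' * dX)) = 0"
          unfolding kron_def by (intro sum.neutral) simp
        then show ?thesis using False by simp
      qed
    qed
    also have "\<dots> = (\<Sum>c'<dX. cnj (x r) * s (r div dX) (r div dX) * t (r mod dX) c' * y (r div dX) c')"
      using rd by (simp add: sum.delta)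
    finally show ?thesis .
  qed
  have "(\<Sum>r<dA * dX. \<Sum>r'<dA * dX. cnj (x r) * kron dX s t r r' * x r')
      = (\<Sum>r<dA * dX. \<Sum>c'<dX. cnj (x r) * s (r div dX) (r div dX) * t (r mod dX) c' * y (r div dX) c')"
    by (rule sum.cong[OF refl]) (simp add: inner)
  also have "\<dots> = (\<Sum>a<dA. \<Sum>c<dX. \<Sum>c'<dX. cnj (x (c + a * dX)) * s a a * t c c' * y a c')"
    by (subst sum_blocks) (rule sum.cong[OF refl], rule sum.cong[OF refl], simp)
  also have "\<dots> = (\<Sum>a<dA. s a a * q a)"
    unfolding q_def y_def sum_distrib_left
    by (rule sum.cong[OF refl], rule sum.cong[OF refl], rule sum.cong[OF refl]) (simp add: mult_ac)
  finally have eq: "(\<Sum>r<dA * dX. \<Sum>r'<dA * dX. cnj (x r) * kron dX s t r r' * x r') = (\<Sum>a<dA. s a a * q a)" .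
  have "Re (\<Sum>a<dA. s a a * q a) = (\<Sum>a<dA. Re (s a a) * Re (q a))"
    unfolding Re_sum
  proof (rule sum.cong[OF refl])
    fix a assume "a \<in> {..<dA}"
    then have e: "s a a = of_real (Re (s a a))" using sf(1) by simp
    have "Re (complex_of_real (Re (s a a)) * q a) = Re (s a a) * Re (q a)" by simp
    then show "Re (s a a * q a) = Re (s a a) * Re (q a)" using e by metis
  qed
  also have "\<dots> \<ge> 0"
  proof (rule sum_nonneg)
    fix a assume a: "a \<in> {..<dA}"
    have "0 \<le> Re (q a)" unfolding q_def using t unfolding density_def by (intro psd_form) simp
    then show "0 \<le> Re (s a a) * Re (q a)" using sf(2) a by simp
  qed
  finally show ?thesis unfolding eq .
qed

lemma IQ_props:
  assumes sig: "\<sigma> \<in> IQ dA dX" and dX: "0 < dX"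
  shows "density (dA * dX) \<sigma>" "blockdiag (dA * dX) dX \<sigma>"
proof -
  let ?N = "dA * dX"
  obtain m :: nat and p :: "nat \<Rightarrow> real" and ss tt :: "nat \<Rightarrow> cmat" where p0: "\<forall>k<m. 0 \<le> p k" and ps: "(\<Sum>k<m. p k) = 1"
    and st: "\<forall>k<m. incoherent dA (ss k) \<and> density dX (tt k)"
    and E: "\<forall>i<?N. \<forall>j<?N. \<sigma> i j = (\<Sum>k<m. of_real (p k) * kron dX (ss k) (tt k) i j)"
    using sig unfolding IQ_def mem_Collect_eq by blast
  have inc: "\<And>k. k < m \<Longrightarrow> incoherent dA (ss k)" and td: "\<And>k. k < m \<Longrightarrow> density dX (tt k)"
    using st by auto
  have Ee: "\<sigma> i j = (\<Sum>k<m. of_real (p k) * (ss k (i div dX) (j div dX) * tt k (i mod dX) (j mod dX)))"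
    if "i < ?N" "j < ?N" for i j using E that unfolding kron_def by blast
  show "blockdiag ?N dX \<sigma>"
    unfolding blockdiag_def
  proof (intro allI impI)
    fix r s assume r: "r < ?N" and s: "s < ?N" and ne: "r div dX \<noteq> s div dX"
    have "(\<Sum>k<m. of_real (p k) * (ss k (r div dX) (s div dX) * tt k (r mod dX) (s mod dX))) = 0"
    proof (rule sum.neutral, rule ballI)
      fix k assume "k \<in> {..<m}"
      then have "ss k (r div dX) (s div dX) = 0" using incoh_facts(4)[OF inc div_lt[OF r] div_lt[OF s] ne] by simp
      then show "of_real (p k) * (ss k (r div dX) (s div dX) * tt k (r mod dX) (s mod dX)) = 0" by simp
    qed
    then show "\<sigma> r s = 0" using Ee[OF r s] by simp
  qed
  have herm: "hermitian_mat ?N \<sigma>"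
    unfolding hermitian_mat_def
  proof (intro allI impI)
    fix i j assume i: "i < ?N" and j: "j < ?N"
    have "\<sigma> j i = (\<Sum>k<m. of_real (p k) * (ss k (j div dX) (i div dX) * tt k (j mod dX) (i mod dX)))"
      by (rule Ee[OF j i])
    also have "\<dots> = (\<Sum>k<m. cnj (of_real (p k) * (ss k (i div dX) (j div dX) * tt k (i mod dX) (j mod dX))))"
    proof (rule sum.cong[OF refl])
      fix k assume k: "k \<in> {..<m}"
      have h1: "ss k (j div dX) (i div dX) = cnj (ss k (i div dX) (j div dX))"
        using herm_entry[OF density_herm div_lt[OF i] div_lt[OF j]] inc k unfolding incoherent_def by simp
      have h2: "tt k (j mod dX) (i mod dX) = cnj (tt k (i mod dX) (j mod dX))"
        using herm_entry[OF density_herm mod_lt[OF dX] mod_lt[OF dX]] td k by simp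
      show "of_real (p k) * (ss k (j div dX) (i div dX) * tt k (j mod dX) (i mod dX)) =
          cnj (of_real (p k) * (ss k (i div dX) (j div dX) * tt k (i mod dX) (j mod dX)))"
        by (simp only: h1 h2 complex_cnj_mult complex_cnj_complex_of_real)
    qed
    also have "\<dots> = cnj (\<sigma> i j)" by (simp add: Ee[OF i j] cnj_sum)
    finally show "\<sigma> j i = cnj (\<sigma> i j)" .
  qed
  have psd: "psd_mat ?N \<sigma>"
    unfolding psd_mat_def
  proof (intro conjI allI herm)
    fix x :: cvec
    have "(\<Sum>i<?N. \<Sum>j<?N. cnj (x i) * \<sigma> i j * x j)
        = (\<Sum>k<m. of_real (p k) * (\<Sum>i<?N. \<Sum>j<?N. cnj (x i) * kron dX (ss k) (tt k) i j * x j))"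
    proof -
      have "(\<Sum>i<?N. \<Sum>j<?N. cnj (x i) * \<sigma> i j * x j)
          = (\<Sum>i<?N. \<Sum>j<?N. \<Sum>k<m. of_real (p k) * (cnj (x i) * kron dX (ss k) (tt k) i j * x j))"
        unfolding sum_distrib_left sum_distrib_right
        by (rule sum.cong[OF refl], rule sum.cong[OF refl]) (simp add: E sum_distrib_left sum_distrib_right mult_ac)
      also have "\<dots> = (\<Sum>k<m. \<Sum>j<?N. \<Sum>i<?N. of_real (p k) * (cnj (x i) * kron dX (ss k) (tt k) i j * x j))"
        by (rule sum_reorder3)
      also have "\<dots> = (\<Sum>k<m. of_real (p k) * (\<Sum>i<?N. \<Sum>j<?N. cnj (x i) * kron dX (ss k) (tt k) i j * x j))"
        unfolding sum_distrib_left by (rule sum.cong[OF refl], rule sum.swap)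
      finally show ?thesis .
    qed
    then have "Re (\<Sum>i<?N. \<Sum>j<?N. cnj (x i) * \<sigma> i j * x j)
        = (\<Sum>k<m. p k * Re (\<Sum>i<?N. \<Sum>j<?N. cnj (x i) * kron dX (ss k) (tt k) i j * x j))"
      by (simp add: Re_sum)
    also have "\<dots> \<ge> 0"
      by (rule sum_nonneg) (use p0 kron_quad[OF inc td dX] in simp)
    finally show "0 \<le> Re (\<Sum>i<?N. \<Sum>j<?N. cnj (x i) * \<sigma> i j * x j)" .
  qed
  have tr: "mtrace ?N \<sigma> = 1"
  proof -
    have "mtrace ?N \<sigma> = (\<Sum>r<?N. \<Sum>k<m. of_real (p k) * (ss k (r div dX) (r div dX) * tt k (r mod dX) (r mod dX)))"
      unfolding mtrace_def by (rule sum.cong[OF refl]) (simp add: Ee)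
    also have "\<dots> = (\<Sum>k<m. of_real (p k) * (\<Sum>r<?N. ss k (r div dX) (r div dX) * tt k (r mod dX) (r mod dX)))"
      unfolding sum_distrib_left by (rule sum.swap)
    also have "\<dots> = (\<Sum>k<m. of_real (p k) * ((\<Sum>a<dA. ss k a a) * (\<Sum>c<dX. tt k c c)))"
      unfolding sum_blocks sum_product by (rule sum.cong[OF refl]) (simp add: sum.swap[of _ "{..<dA}"])
    also have "\<dots> = (\<Sum>k<m. of_real (p k))"
    proof (rule sum.cong[OF refl])
      fix k assume k: "k \<in> {..<m}"
      have "(\<Sum>a<dA. ss k a a) = 1" using incoh_facts(3)[OF inc] k by simp
      moreover have "(\<Sum>c<dX. tt k c c) = 1" using td k unfolding density_def mtrace_def by simp
      ultimately show "of_real (p k) * ((\<Sum>a<dA. ss k a a) * (\<Sum>c<dX. tt k c c)) = of_real (p k)" by simp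
    qed
    also have "\<dots> = 1" using ps by (simp flip: of_real_sum)
    finally show ?thesis .
  qed
  show "density ?N \<sigma>" unfolding density_def using psd tr by blast
qed



lemma unit_quad: fixes n :: nat assumes "a < n"
  shows "(\<Sum>i<n. \<Sum>j<n. cnj (x i) * (if i = a \<and> j = a then 1 else 0) * x j) = cnj (x a) * x a"
proof -
  have "(\<Sum>i<n. \<Sum>j<n. cnj (x i) * (if i = a \<and> j = a then 1 else 0) * x j)
      = (\<Sum>i<n. if i = a then (\<Sum>j<n. if j = a then cnj (x i) * x j else 0) else 0)"
  proof (rule sum.cong[OF refl])
    fix i
    show "(\<Sum>j<n. cnj (x i) * (if i = a \<and> j = a then 1 else 0) * x j) = (if i = a then (\<Sum>j<n. if j = a then cnj (x i) * x j else 0) else 0)"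
    proof (cases "i = a")
      case True
      have "(\<Sum>j<n. cnj (x i) * (if i = a \<and> j = a then 1 else 0) * x j) = (\<Sum>j<n. if j = a then cnj (x i) * x j else 0)"
        by (rule sum.cong[OF refl]) (simp add: True)
      then show ?thesis using True by simp
    next
      case False
      have "(\<Sum>j<n. cnj (x i) * (if i = a \<and> j = a then 1 else 0) * x j) = 0"
        by (rule sum.neutral) (simp add: False)
      then show ?thesis using False by simp
    qed
  qed
  also have "\<dots> = cnj (x a) * x a" using assms by (simp add: sum.delta)
  finally show ?thesis .
qed

lemma unit_density: fixes n :: nat assumes a: "a < n"
  shows "density n (\<lambda>i j. if i = a \<and> j = a then 1 else 0)"
  unfolding density_def psd_mat_def
proof (intro conjI allI)
  show "hermitian_mat n (\<lambda>i j. if i = a \<and> j = a then 1 else 0)"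
    unfolding hermitian_mat_def by auto
  fix x :: cvec
  show "0 \<le> Re (\<Sum>i<n. \<Sum>j<n. cnj (x i) * (if i = a \<and> j = a then 1 else 0) * x j)"
    unfolding unit_quad[OF a] by (simp add: zcnj[of "x a", simplified mult.commute] mult.commute)
next
  show "mtrace n (\<lambda>i j. if i = a \<and> j = a then 1 else 0) = 1"
    unfolding mtrace_def using a by (simp add: sum.delta)
qed

lemma unit_incoherent: fixes n :: nat assumes a: "a < n"
  shows "incoherent n (\<lambda>i j. if i = a \<and> j = a then 1 else 0)"
  unfolding incoherent_def using unit_density[OF a] by auto

lemma block_quad:
  fixes dA dX a :: nat and y :: cvec
  assumes a: "a < dA" and dX: "0 < dX"
  defines "x \<equiv> (\<lambda>r. if r div dX = a then y (r mod dX) else 0)"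
  shows "(\<Sum>r<dA * dX. \<Sum>s<dA * dX. cnj (x r) * A r s * x s)
       = (\<Sum>c<dX. \<Sum>c'<dX. cnj (y c) * A (c + a * dX) (c' + a * dX) * y c')"
proof -
  have inner: "(\<Sum>s<dA * dX. cnj (x r) * A r s * x s) = (\<Sum>c'<dX. cnj (x r) * A r (c' + a * dX) * y c')" for r
  proof -
    have "(\<Sum>s<dA * dX. cnj (x r) * A r s * x s) = (\<Sum>a'<dA. \<Sum>c'<dX. cnj (x r) * A r (c' + a' * dX) * x (c' + a' * dX))"
      by (rule sum_blocks)
    also have "\<dots> = (\<Sum>a'<dA. if a' = a then (\<Sum>c'<dX. cnj (x r) * A r (c' + a * dX) * y c') else 0)"
    proof (rule sum.cong[OF refl])
      fix a'
      show "(\<Sum>c'<dX. cnj (x r) * A r (c' + a' * dX) * x (c' + a' * dX)) =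
          (if a' = a then (\<Sum>c'<dX. cnj (x r) * A r (c' + a * dX) * y c') else 0)"
      proof (cases "a' = a")
        case True
        have "(\<Sum>c'<dX. cnj (x r) * A r (c' + a' * dX) * x (c' + a' * dX)) = (\<Sum>c'<dX. cnj (x r) * A r (c' + a * dX) * y c')"
          by (rule sum.cong[OF refl]) (simp add: x_def True)
        then show ?thesis using True by simp
      next
        case False
        have "(\<Sum>c'<dX. cnj (x r) * A r (c' + a' * dX) * x (c' + a' * dX)) = 0"
          by (rule sum.neutral) (use False in \<open>simp add: x_def\<close>)
        then show ?thesis using False by simp
      qed
    qed
    also have "\<dots> = (\<Sum>c'<dX. cnj (x r) * A r (c' + a * dX) * y c')" using a by (simp add: sum.delta')
    finally show ?thesis .
  qed
  have "(\<Sum>r<dA * dX. \<Sum>s<dA * dX. cnj (x r) * A r s * x s) = (\<Sum>r<dA * dX. \<Sum>c'<dX. cnj (x r) * A r (c' + a * dX) * y c')"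
    by (simp add: inner)
  also have "\<dots> = (\<Sum>a'<dA. \<Sum>c<dX. \<Sum>c'<dX. cnj (x (c + a' * dX)) * A (c + a' * dX) (c' + a * dX) * y c')"
    by (rule sum_blocks)
  also have "\<dots> = (\<Sum>a'<dA. if a' = a then (\<Sum>c<dX. \<Sum>c'<dX. cnj (y c) * A (c + a * dX) (c' + a * dX) * y c') else 0)"
  proof (rule sum.cong[OF refl])
    fix a'
    show "(\<Sum>c<dX. \<Sum>c'<dX. cnj (x (c + a' * dX)) * A (c + a' * dX) (c' + a * dX) * y c') =
        (if a' = a then (\<Sum>c<dX. \<Sum>c'<dX. cnj (y c) * A (c + a * dX) (c' + a * dX) * y c') else 0)"
    proof (cases "a' = a")
      case True
      have "(\<Sum>c<dX. \<Sum>c'<dX. cnj (x (c + a' * dX)) * A (c + a' * dX) (c' + a * dX) * y c') = (\<Sum>c<dX. \<Sum>c'<dX. cnj (y c) * A (c + a * dX) (c' + a * dX) * y c')"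
        by (rule sum.cong[OF refl]) (simp add: x_def True)
      then show ?thesis using True by simp
    next
      case False
      have "(\<Sum>c<dX. \<Sum>c'<dX. cnj (x (c + a' * dX)) * A (c + a' * dX) (c' + a * dX) * y c') = 0"
        by (rule sum.neutral) (use False in \<open>simp add: x_def\<close>)
      then show ?thesis using False by simp
    qed
  qed
  also have "\<dots> = (\<Sum>c<dX. \<Sum>c'<dX. cnj (y c) * A (c + a * dX) (c' + a * dX) * y c')" using a by (simp add: sum.delta')
  finally show ?thesis .
qed

lemma blk_idx: fixes c a dX dA :: nat shows "c < dX \<Longrightarrow> a < dA \<Longrightarrow> c + a * dX < dA * dX"
proof -
  assume "c < dX" "a < dA"
  then have "c + a * dX < dX + a * dX" by simp
  also have "\<dots> = (Suc a) * dX" by simp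
  also have "\<dots> \<le> dA * dX" using \<open>a < dA\<close> by (intro mult_right_mono) auto
  finally show ?thesis .
qed

lemma deph_in_IQ:
  assumes rho: "density (dA * dX) \<rho>" and dX: "0 < dX"
  shows "deph dX \<rho> \<in> IQ dA dX"
proof -
  let ?N = "dA * dX"
  have herm: "hermitian_mat ?N \<rho>" using density_herm[OF rho] .
  have psd: "psd_mat ?N \<rho>" using rho unfolding density_def by blast
  define d where "d r = Re (\<rho> r r)" for r
  have dr: "\<rho> r r = of_real (d r)" if "r < ?N" for r unfolding d_def by (rule herm_diag_real[OF herm that])
  have d0: "0 \<le> d r" if "r < ?N" for r unfolding d_def by (rule psd_diag_nonneg[OF psd that])
  define pb where "pb a = (\<Sum>c<dX. d (c + a * dX))" for a
  have pb0: "0 \<le> pb a" if "a < dA" for a unfolding pb_def by (rule sum_nonneg) (simp add: d0 blk_idx that)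
  have pbs: "(\<Sum>a<dA. pb a) = 1"
  proof -
    have "(\<Sum>a<dA. pb a) = (\<Sum>r<?N. d r)" unfolding pb_def by (rule sum_blocks[symmetric])
    also have "\<dots> = Re (mtrace ?N \<rho>)" unfolding mtrace_def d_def by (simp add: Re_sum)
    also have "\<dots> = 1" using rho unfolding density_def by simp
    finally show ?thesis .
  qed
  define ss where "ss a = (\<lambda>i j. if i = a \<and> j = a then (1::complex) else 0)" for a :: nat
  define e0 :: cmat where "e0 = (\<lambda>i j. if i = 0 \<and> j = 0 then (1::complex) else 0)"
  define tt where "tt a = (if pb a > 0 then (\<lambda>c c'. \<rho> (c + a * dX) (c' + a * dX) / of_real (pb a)) else e0)" for a
  have ssi: "incoherent dA (ss a)" if "a < dA" for a unfolding ss_def by (rule unit_incoherent[OF that])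
  have ttd: "density dX (tt a)" if a: "a < dA" for a
  proof (cases "pb a > 0")
    case False
    then show ?thesis unfolding tt_def e0_def using unit_density[OF dX] by simp
  next
    case True
    define T where "T = (\<lambda>c c'. \<rho> (c + a * dX) (c' + a * dX) / of_real (pb a))"
    have tT: "tt a = T" unfolding tt_def T_def using True by simp
    have hT: "hermitian_mat dX T"
      unfolding hermitian_mat_def
    proof (intro allI impI)
      fix i j assume i: "i < dX" and j: "j < dX"
      have "\<rho> (j + a * dX) (i + a * dX) = cnj (\<rho> (i + a * dX) (j + a * dX))"
        by (rule herm_entry[OF herm blk_idx[OF i a] blk_idx[OF j a]])
      then show "T j i = cnj (T i j)" unfolding T_def by simp
    qed
    have pT: "0 \<le> Re (\<Sum>i<dX. \<Sum>j<dX. cnj (y i) * T i j * y j)" for y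
    proof -
      have "(\<Sum>i<dX. \<Sum>j<dX. cnj (y i) * T i j * y j) = (\<Sum>i<dX. \<Sum>j<dX. cnj (y i) * \<rho> (i + a * dX) (j + a * dX) * y j) / of_real (pb a)"
        unfolding T_def sum_divide_distrib by (rule sum.cong[OF refl], rule sum.cong[OF refl]) simp
      also have "(\<Sum>i<dX. \<Sum>j<dX. cnj (y i) * \<rho> (i + a * dX) (j + a * dX) * y j)
          = (\<Sum>r<?N. \<Sum>s<?N. cnj ((\<lambda>r. if r div dX = a then y (r mod dX) else 0) r) * \<rho> r s * (\<lambda>r. if r div dX = a then y (r mod dX) else 0) s)"
        by (rule block_quad[OF a dX, symmetric])
      finally have eq: "(\<Sum>i<dX. \<Sum>j<dX. cnj (y i) * T i j * y j) = (\<Sum>r<?N. \<Sum>s<?N. cnj ((\<lambda>r. if r div dX = a then y (r mod dX) else 0) r) * \<rho> r s * (\<lambda>r. if r div dX = a then y (r mod dX) else 0) s) / of_real (pb a)" .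
      have "0 \<le> Re (\<Sum>r<?N. \<Sum>s<?N. cnj ((\<lambda>r. if r div dX = a then y (r mod dX) else 0) r) * \<rho> r s * (\<lambda>r. if r div dX = a then y (r mod dX) else 0) s)"
        by (rule psd_form[OF psd])
      then show ?thesis unfolding eq using True by (simp add: Re_divide_of_real)
    qed
    have trT: "mtrace dX T = 1"
    proof -
      have "mtrace dX T = (\<Sum>c<dX. of_real (d (c + a * dX))) / of_real (pb a)"
        unfolding mtrace_def T_def sum_divide_distrib by (rule sum.cong[OF refl]) (simp add: dr blk_idx a)
      also have "\<dots> = 1" using True by (simp add: pb_def flip: of_real_sum)
      finally show ?thesis .
    qed
    show ?thesis unfolding tT density_def psd_mat_def using hT pT trT by blast
  qed
  have eq: "deph dX \<rho> i j = (\<Sum>k<dA. of_real (pb k) * kron dX (ss k) (tt k) i j)" if i: "i < ?N" and j: "j < ?N" for i j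
  proof -
    have ia: "i div dX < dA" by (rule div_lt[OF i])
    have "(\<Sum>k<dA. of_real (pb k) * kron dX (ss k) (tt k) i j)
        = (\<Sum>k<dA. if k = i div dX then (if i div dX = j div dX then of_real (pb k) * tt k (i mod dX) (j mod dX) else 0) else 0)"
      by (rule sum.cong[OF refl]) (auto simp: kron_def ss_def)
    also have "\<dots> = (if i div dX = j div dX then of_real (pb (i div dX)) * tt (i div dX) (i mod dX) (j mod dX) else 0)"
      using ia by (simp add: sum.delta')
    also have "\<dots> = deph dX \<rho> i j"
    proof (cases "i div dX = j div dX")
      case False then show ?thesis by (simp add: deph_def)
    next
      case True
      let ?a = "i div dX"
      have ii: "i mod dX + ?a * dX = i" by simp
      have jj: "j mod dX + ?a * dX = j" using True by (metis mod_div_mult_eq)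
      show ?thesis
      proof (cases "pb ?a > 0")
        case True': True
        have "tt ?a (i mod dX) (j mod dX) = \<rho> (i mod dX + ?a * dX) (j mod dX + ?a * dX) / of_real (pb ?a)"
          using True' by (simp add: tt_def)
        also have "\<dots> = \<rho> i j / of_real (pb ?a)" by (simp only: ii jj)
        finally have "of_real (pb ?a) * tt ?a (i mod dX) (j mod dX) = \<rho> i j" using True' by simp
        then show ?thesis using True by (simp add: deph_def)
      next
        case False
        then have p0: "pb ?a = 0" using pb0[OF ia] by simp
        have "d i \<le> pb ?a"
        proof -
          have "d (i mod dX + ?a * dX) \<le> pb ?a" unfolding pb_def
            by (rule member_le_sum) (use dX in \<open>simp_all add: d0 blk_idx ia\<close>)
          then show ?thesis by (simp only: ii)
        qed
        then have "d i = 0" using d0[OF i] p0 by simp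
        then have "\<rho> i i = 0" using dr[OF i] by simp
        then have "\<rho> i j = 0" by (rule density_zero_row[OF rho i j])
        then show ?thesis using True p0 by (simp add: deph_def)
      qed
    qed
    finally show ?thesis by simp
  qed
  show ?thesis unfolding IQ_def mem_Collect_eq
    apply (rule exI[of _ dA], rule exI[of _ pb], rule exI[of _ ss], rule exI[of _ tt])
    using pb0 pbs ssi ttd eq by blast
qed



lemma trace_diff:
  "mtrace n (mmult n \<rho> (\<lambda>i j. F i j - G i j)) = mtrace n (mmult n \<rho> F) - mtrace n (mmult n \<rho> G)"
  unfolding mtrace_def mmult_def by (simp add: right_diff_distrib sum_subtractf)

lemma rel_entropy_val:
  assumes "supp_le n \<rho> \<sigma>"
  shows "rel_entropy n \<rho> \<sigma> = ereal (Re (mtrace n (mmult n \<rho> (mat_fun n logs \<rho>))) - Re (mtrace n (mmult n \<rho> (mat_fun n logs \<sigma>))))"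
  unfolding rel_entropy_def using assms by (simp add: trace_diff)

lemma ent_re: "Re (mtrace n (mmult n \<rho> (mat_fun n logs \<rho>))) = - von_neumann_entropy n \<rho>"
  unfolding von_neumann_entropy_def by simp

theorem coherence_formula:
  assumes rho: "density (dA * dX) \<rho>" and dX: "0 < dX"
  shows "IQ_coherence dA dX \<rho> = ereal (von_neumann_entropy (dA * dX) (deph dX \<rho>) - von_neumann_entropy (dA * dX) \<rho>)"
proof -
  let ?N = "dA * dX"
  let ?D = "deph dX \<rho>"
  define V where "V = von_neumann_entropy ?N ?D - von_neumann_entropy ?N \<rho>"
  have DIQ: "?D \<in> IQ dA dX" by (rule deph_in_IQ[OF rho dX])
  have Dd: "density ?N ?D" using IQ_props(1)[OF DIQ dX] .
  have hD: "hermitian_mat ?N ?D" using density_herm[OF Dd] .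
  have trD: "mtrace ?N (mmult ?N \<rho> (mat_fun ?N logs ?D)) = mtrace ?N (mmult ?N ?D (mat_fun ?N logs ?D))"
    by (rule trace_deph[OF fun_blockdiag[OF hD deph_blockdiag]])
  have val: "rel_entropy ?N \<rho> ?D = ereal V"
    unfolding rel_entropy_val[OF supp_deph[OF rho]] trD ent_re V_def by simp
  have low: "ereal V \<le> rel_entropy ?N \<rho> \<sigma>" if sig: "\<sigma> \<in> IQ dA dX" for \<sigma>
  proof (cases "supp_le ?N \<rho> \<sigma>")
    case False
    then show ?thesis unfolding rel_entropy_def by simp
  next
    case True
    have sd: "density ?N \<sigma>" and sbd: "blockdiag ?N dX \<sigma>" using IQ_props[OF sig dX] by auto
    have hs: "hermitian_mat ?N \<sigma>" using density_herm[OF sd] .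
    have sp: "spectral_decomp ?N \<sigma> (sdl ?N \<sigma>) (sdv ?N \<sigma>)" using sd_spec[OF hs] .
    have tr: "mtrace ?N (mmult ?N \<rho> (mat_fun ?N logs \<sigma>)) = mtrace ?N (mmult ?N ?D (mat_fun ?N logs \<sigma>))"
      by (rule trace_deph[OF fun_blockdiag[OF hs sbd]])
    have supp: "Re (cinner ?N (sdv ?N \<sigma> l) (mv ?N ?D (sdv ?N \<sigma> l))) = 0"
      if l: "l < ?N" and b0: "sdl ?N \<sigma> l = 0" for l
    proof (rule klein_supp[OF rho sbd True])
      fix i assume i: "i < ?N"
      show "mv ?N \<sigma> (sdv ?N \<sigma> l) i = 0" using spec_eig[OF sp l i] b0 by simp
    qed
    have K: "Re (mtrace ?N (mmult ?N ?D (mat_fun ?N logs \<sigma>))) \<le> Re (mtrace ?N (mmult ?N ?D (mat_fun ?N logs ?D)))"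
      by (rule klein[OF Dd sd supp])
    have "V \<le> Re (mtrace ?N (mmult ?N \<rho> (mat_fun ?N logs \<rho>))) - Re (mtrace ?N (mmult ?N \<rho> (mat_fun ?N logs \<sigma>)))"
      unfolding tr ent_re V_def using K ent_re[of ?N ?D] by linarith
    then show ?thesis unfolding rel_entropy_val[OF True] by simp
  qed
  have "IQ_coherence dA dX \<rho> = ereal V"
    unfolding IQ_coherence_def
  proof (rule antisym)
    show "(INF \<sigma>\<in>IQ dA dX. rel_entropy ?N \<rho> \<sigma>) \<le> ereal V"
      using INF_lower[OF DIQ, of "rel_entropy ?N \<rho>"] val by simp
    show "ereal V \<le> (INF \<sigma>\<in>IQ dA dX. rel_entropy ?N \<rho> \<sigma>)"
      by (rule INF_greatest) (rule low)
  qed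
  then show ?thesis unfolding V_def .
qed



lemma entropy_cong:
  assumes eq: "\<And>i j. i < n \<Longrightarrow> j < n \<Longrightarrow> A i j = B i j"
  shows "von_neumann_entropy n A = von_neumann_entropy n B"
proof -
  have "spectral_decomp n A lam v = spectral_decomp n B lam v" for lam v
    unfolding spectral_decomp_def using eq by auto
  then have "spectral_decomp n A = spectral_decomp n B" by (intro ext)
  then have "sd n A = sd n B" unfolding sd_def by (simp only:)
  then have mf: "mat_fun n logs A = mat_fun n logs B" unfolding mat_fun_sd sdl_def sdv_def by simp
  have "mtrace n (mmult n A (mat_fun n logs A)) = mtrace n (mmult n B (mat_fun n logs B))"
    unfolding mf mtrace_def mmult_def by (rule sum.cong[OF refl], rule sum.cong[OF refl]) (simp add: eq)
  then show ?thesis unfolding von_neumann_entropy_def by simp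
qed

lemma gram_density:
  fixes M :: "nat \<Rightarrow> nat \<Rightarrow> complex"
  assumes tr: "(\<Sum>r<m. \<Sum>c<p. (cmod (M r c))\<^sup>2) = 1"
  shows "density m (\<lambda>i j. \<Sum>c<p. M i c * cnj (M j c))"
  unfolding density_def psd_mat_def
proof (intro conjI allI)
  show "hermitian_mat m (\<lambda>i j. \<Sum>c<p. M i c * cnj (M j c))" by (rule gram_herm)
  fix x :: cvec
  define z where "z c = (\<Sum>i<m. cnj (x i) * M i c)" for c
  have "(\<Sum>i<m. \<Sum>j<m. cnj (x i) * (\<Sum>c<p. M i c * cnj (M j c)) * x j) = (\<Sum>i<m. \<Sum>j<m. \<Sum>c<p. cnj (x i) * M i c * (cnj (M j c) * x j))"
    by (rule sum.cong[OF refl], rule sum.cong[OF refl]) (simp add: sum_distrib_left sum_distrib_right mult_ac)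
  also have "\<dots> = (\<Sum>c<p. \<Sum>j<m. \<Sum>i<m. cnj (x i) * M i c * (cnj (M j c) * x j))" by (rule sum_reorder3)
  also have "\<dots> = (\<Sum>c<p. z c * cnj (z c))"
    unfolding z_def cnj_sum sum_product by (rule sum.cong[OF refl]) (subst sum.swap, simp add: mult_ac)
  finally have e: "(\<Sum>i<m. \<Sum>j<m. cnj (x i) * (\<Sum>c<p. M i c * cnj (M j c)) * x j) = (\<Sum>c<p. z c * cnj (z c))" .
  show "0 \<le> Re (\<Sum>i<m. \<Sum>j<m. cnj (x i) * (\<Sum>c<p. M i c * cnj (M j c)) * x j)"
    unfolding e Re_sum by (rule sum_nonneg) (simp add: zcnj)
next
  have "mtrace m (\<lambda>i j. \<Sum>c<p. M i c * cnj (M j c)) = (\<Sum>r<m. \<Sum>c<p. of_real ((cmod (M r c))\<^sup>2))"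
    unfolding mtrace_def by (rule sum.cong[OF refl], rule sum.cong[OF refl]) (simp add: zcnj)
  also have "\<dots> = of_real (\<Sum>r<m. \<Sum>c<p. (cmod (M r c))\<^sup>2)" by (simp only: of_real_sum)
  also have "\<dots> = 1" using tr by simp
  finally show "mtrace m (\<lambda>i j. \<Sum>c<p. M i c * cnj (M j c)) = 1" .
qed



lemma divmod_blk2 [simp]: fixes c a dX :: nat shows "c < dX \<Longrightarrow> (a * dX + c) div dX = a" "c < dX \<Longrightarrow> (a * dX + c) mod dX = c"
  by simp_all

theorem proposition1:
  fixes dA dB dC :: nat and \<psi> :: cvec
  assumes "(\<Sum>i<dA*dB*dC. (cmod (\<psi> i))\<^sup>2) = 1"
  defines "\<rho>ABC \<equiv> proj \<psi>"
  defines "\<rho>AB \<equiv> ptrace_second dC \<rho>ABC"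
  defines "\<rho>AC \<equiv> ptrace_mid dB dC \<rho>ABC"
  defines "\<rho>B \<equiv> ptrace_first dA dB \<rho>AB"
  defines "\<rho>C \<equiv> ptrace_first dA dC \<rho>AC"
  shows "IQ_coherence dA dB \<rho>AB - IQ_coherence dA dC \<rho>AC
           = ereal (von_neumann_entropy dB \<rho>B - von_neumann_entropy dC \<rho>C)"
proof -
  note norm1 = assms(1)
  have N0: "dA * dB * dC \<noteq> 0"
  proof
    assume h: "dA * dB * dC = 0"
    have "(\<Sum>i<dA*dB*dC. (cmod (\<psi> i))\<^sup>2) = 0" unfolding h by simp
    then show False using norm1 by simp
  qed
  then have dA: "0 < dA" and dB: "0 < dB" and dC: "0 < dC" by auto
  define M1 where "M1 r c = \<psi> (r * dC + c)" for r c
  define M2 where "M2 b r = \<psi> ((r div dC * dB + b) * dC + r mod dC)" for b r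
  have AB: "\<rho>AB = (\<lambda>i j. \<Sum>c<dC. M1 i c * cnj (M1 j c))"
    unfolding \<rho>AB_def \<rho>ABC_def ptrace_second_def proj_def M1_def by simp
  have AC: "\<rho>AC = (\<lambda>r s. \<Sum>b<dB. M2 b r * cnj (M2 b s))"
    unfolding \<rho>AC_def \<rho>ABC_def ptrace_mid_def proj_def M2_def by simp
  have B: "\<rho>B = (\<lambda>i j. \<Sum>r<dA * dC. M2 i r * cnj (M2 j r))"
  proof (intro ext)
    fix i j
    have "\<rho>B i j = (\<Sum>a<dA. \<Sum>c<dC. \<psi> ((a * dB + i) * dC + c) * cnj (\<psi> ((a * dB + j) * dC + c)))"
      unfolding \<rho>B_def ptrace_first_def AB M1_def by simp
    also have "\<dots> = (\<Sum>a<dA. \<Sum>c<dC. M2 i (c + a * dC) * cnj (M2 j (c + a * dC)))"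
      by (rule sum.cong[OF refl], rule sum.cong[OF refl]) (simp add: M2_def)
    also have "\<dots> = (\<Sum>r<dA * dC. M2 i r * cnj (M2 j r))" by (rule sum_blocks[symmetric])
    finally show "\<rho>B i j = (\<Sum>r<dA * dC. M2 i r * cnj (M2 j r))" .
  qed
  have C: "\<rho>C i j = (\<Sum>r<dA * dB. M1 r i * cnj (M1 r j))" if i: "i < dC" and j: "j < dC" for i j
  proof -
    have "\<rho>C i j = (\<Sum>a<dA. \<Sum>b<dB. \<psi> ((a * dB + b) * dC + i) * cnj (\<psi> ((a * dB + b) * dC + j)))"
      unfolding \<rho>C_def ptrace_first_def AC M2_def using i j by simp
    also have "\<dots> = (\<Sum>a<dA. \<Sum>b<dB. M1 (b + a * dB) i * cnj (M1 (b + a * dB) j))"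
      by (rule sum.cong[OF refl], rule sum.cong[OF refl]) (simp add: M1_def add.commute)
    also have "\<dots> = (\<Sum>r<dA * dB. M1 r i * cnj (M1 r j))" by (rule sum_blocks[symmetric])
    finally show ?thesis .
  qed
  have eAB: "von_neumann_entropy (dA * dB) \<rho>AB = von_neumann_entropy dC \<rho>C"
  proof -
    have "von_neumann_entropy (dA * dB) \<rho>AB = von_neumann_entropy dC (\<lambda>c c'. \<Sum>r<dA * dB. M1 r c * cnj (M1 r c'))"
      unfolding AB by (rule gram_entropy)
    also have "\<dots> = von_neumann_entropy dC \<rho>C"
      by (rule entropy_cong) (simp add: C)
    finally show ?thesis .
  qed
  have eB: "von_neumann_entropy dB \<rho>B = von_neumann_entropy (dA * dC) \<rho>AC"
    unfolding B AC by (rule gram_entropy)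
  have tot: "(\<Sum>a<dA. \<Sum>b<dB. \<Sum>c<dC. (cmod (\<psi> ((a * dB + b) * dC + c)))\<^sup>2) = 1"
  proof -
    have "(\<Sum>i<dA*dB*dC. (cmod (\<psi> i))\<^sup>2) = (\<Sum>r<dA*dB. \<Sum>c<dC. (cmod (\<psi> (c + r * dC)))\<^sup>2)"
      by (rule sum_blocks)
    also have "\<dots> = (\<Sum>a<dA. \<Sum>b<dB. \<Sum>c<dC. (cmod (\<psi> (c + (b + a * dB) * dC)))\<^sup>2)"
      by (rule sum_blocks)
    also have "\<dots> = (\<Sum>a<dA. \<Sum>b<dB. \<Sum>c<dC. (cmod (\<psi> ((a * dB + b) * dC + c)))\<^sup>2)"
      by (simp add: add.commute)
    finally show ?thesis using norm1 by simp
  qed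
  have dAB: "density (dA * dB) \<rho>AB"
    unfolding AB
  proof (rule gram_density)
    have "(\<Sum>r<dA * dB. \<Sum>c<dC. (cmod (M1 r c))\<^sup>2) = (\<Sum>a<dA. \<Sum>b<dB. \<Sum>c<dC. (cmod (M1 (b + a * dB) c))\<^sup>2)"
      by (rule sum_blocks)
    also have "\<dots> = 1" using tot by (simp add: M1_def add.commute)
    finally show "(\<Sum>r<dA * dB. \<Sum>c<dC. (cmod (M1 r c))\<^sup>2) = 1" .
  qed
  have dAC: "density (dA * dC) \<rho>AC"
  proof -
    have "\<rho>AC = (\<lambda>i j. \<Sum>b<dB. (\<lambda>r b. M2 b r) i b * cnj ((\<lambda>r b. M2 b r) j b))" unfolding AC by simp
    moreover have "density (dA * dC) (\<lambda>i j. \<Sum>b<dB. (\<lambda>r b. M2 b r) i b * cnj ((\<lambda>r b. M2 b r) j b))"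
    proof (rule gram_density)
      have "(\<Sum>r<dA * dC. \<Sum>b<dB. (cmod (M2 b r))\<^sup>2) = (\<Sum>a<dA. \<Sum>c<dC. \<Sum>b<dB. (cmod (M2 b (c + a * dC)))\<^sup>2)"
        by (rule sum_blocks)
      also have "\<dots> = (\<Sum>a<dA. \<Sum>c<dC. \<Sum>b<dB. (cmod (\<psi> ((a * dB + b) * dC + c)))\<^sup>2)"
        by (rule sum.cong[OF refl], rule sum.cong[OF refl]) (simp add: M2_def)
      also have "\<dots> = (\<Sum>a<dA. \<Sum>b<dB. \<Sum>c<dC. (cmod (\<psi> ((a * dB + b) * dC + c)))\<^sup>2)"
        by (rule sum.cong[OF refl], rule sum.swap)
      also have "\<dots> = 1" by (rule tot)
      finally show "(\<Sum>r<dA * dC. \<Sum>b<dB. (cmod ((\<lambda>r b. M2 b r) r b))\<^sup>2) = 1" by simp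
    qed
    ultimately show ?thesis by simp
  qed
  define M3 where "M3 r t = (if r div dB = t div dC then \<psi> (r * dC + t mod dC) else 0)" for r t
  have R1: "(\<Sum>t<dA * dC. M3 r t * cnj (M3 s t)) = deph dB \<rho>AB r s" if r: "r < dA * dB" and s: "s < dA * dB" for r s
  proof -
    have ra: "r div dB < dA" by (rule div_lt[OF r])
    have "(\<Sum>t<dA * dC. M3 r t * cnj (M3 s t)) = (\<Sum>a<dA. \<Sum>c<dC. M3 r (c + a * dC) * cnj (M3 s (c + a * dC)))"
      by (rule sum_blocks)
    also have "\<dots> = (\<Sum>a<dA. if a = r div dB then (if r div dB = s div dB then (\<Sum>c<dC. \<psi> (r * dC + c) * cnj (\<psi> (s * dC + c))) else 0) else 0)"
    proof (rule sum.cong[OF refl])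
      fix a
      show "(\<Sum>c<dC. M3 r (c + a * dC) * cnj (M3 s (c + a * dC))) =
          (if a = r div dB then (if r div dB = s div dB then (\<Sum>c<dC. \<psi> (r * dC + c) * cnj (\<psi> (s * dC + c))) else 0) else 0)"
      proof (cases "a = r div dB \<and> r div dB = s div dB")
        case True
        have "(\<Sum>c<dC. M3 r (c + a * dC) * cnj (M3 s (c + a * dC))) = (\<Sum>c<dC. \<psi> (r * dC + c) * cnj (\<psi> (s * dC + c)))"
          by (rule sum.cong[OF refl]) (use True in \<open>simp add: M3_def\<close>)
        then show ?thesis using True by simp
      next
        case False
        have "(\<Sum>c<dC. M3 r (c + a * dC) * cnj (M3 s (c + a * dC))) = 0"
          by (rule sum.neutral) (use False in \<open>auto simp: M3_def\<close>)
        then show ?thesis using False by auto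
      qed
    qed
    also have "\<dots> = (if r div dB = s div dB then (\<Sum>c<dC. \<psi> (r * dC + c) * cnj (\<psi> (s * dC + c))) else 0)"
      using ra by (simp add: sum.delta')
    also have "\<dots> = deph dB \<rho>AB r s" unfolding deph_def AB M1_def by simp
    finally show ?thesis .
  qed
  have R2: "(\<Sum>r<dA * dB. M3 r t * cnj (M3 r u)) = deph dC \<rho>AC t u" if t: "t < dA * dC" and u: "u < dA * dC" for t u
  proof -
    have ta: "t div dC < dA" by (rule div_lt[OF t])
    have "(\<Sum>r<dA * dB. M3 r t * cnj (M3 r u)) = (\<Sum>a<dA. \<Sum>b<dB. M3 (b + a * dB) t * cnj (M3 (b + a * dB) u))"
      by (rule sum_blocks)
    also have "\<dots> = (\<Sum>a<dA. if a = t div dC then (if t div dC = u div dC then (\<Sum>b<dB. M2 b t * cnj (M2 b u)) else 0) else 0)"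
    proof (rule sum.cong[OF refl])
      fix a
      show "(\<Sum>b<dB. M3 (b + a * dB) t * cnj (M3 (b + a * dB) u)) =
          (if a = t div dC then (if t div dC = u div dC then (\<Sum>b<dB. M2 b t * cnj (M2 b u)) else 0) else 0)"
      proof (cases "a = t div dC \<and> t div dC = u div dC")
        case True
        have "(\<Sum>b<dB. M3 (b + a * dB) t * cnj (M3 (b + a * dB) u)) = (\<Sum>b<dB. M2 b t * cnj (M2 b u))"
          by (rule sum.cong[OF refl]) (use True in \<open>simp add: M3_def M2_def add.commute\<close>)
        then show ?thesis using True by simp
      next
        case False
        have "(\<Sum>b<dB. M3 (b + a * dB) t * cnj (M3 (b + a * dB) u)) = 0"
          by (rule sum.neutral) (use False in \<open>auto simp: M3_def\<close>)
        then show ?thesis using False by auto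
      qed
    qed
    also have "\<dots> = (if t div dC = u div dC then (\<Sum>b<dB. M2 b t * cnj (M2 b u)) else 0)"
      using ta by (simp add: sum.delta')
    also have "\<dots> = deph dC \<rho>AC t u" unfolding deph_def AC by simp
    finally show ?thesis .
  qed
  have eD: "von_neumann_entropy (dA * dB) (deph dB \<rho>AB) = von_neumann_entropy (dA * dC) (deph dC \<rho>AC)"
  proof -
    have "von_neumann_entropy (dA * dB) (deph dB \<rho>AB) = von_neumann_entropy (dA * dB) (\<lambda>r s. \<Sum>t<dA * dC. M3 r t * cnj (M3 s t))"
      by (rule entropy_cong) (simp add: R1)
    also have "\<dots> = von_neumann_entropy (dA * dC) (\<lambda>t u. \<Sum>r<dA * dB. M3 r t * cnj (M3 r u))"
      by (rule gram_entropy)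
    also have "\<dots> = von_neumann_entropy (dA * dC) (deph dC \<rho>AC)"
      by (rule entropy_cong) (simp add: R2)
    finally show ?thesis .
  qed
  have cAB: "IQ_coherence dA dB \<rho>AB = ereal (von_neumann_entropy (dA * dB) (deph dB \<rho>AB) - von_neumann_entropy (dA * dB) \<rho>AB)"
    by (rule coherence_formula[OF dAB dB])
  have cAC: "IQ_coherence dA dC \<rho>AC = ereal (von_neumann_entropy (dA * dC) (deph dC \<rho>AC) - von_neumann_entropy (dA * dC) \<rho>AC)"
    by (rule coherence_formula[OF dAC dC])
  show ?thesis unfolding cAB cAC eD eAB eB by simp
qed


end
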